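(* Let $Z$ be a measure space, $p\in(1,\infty)$, and $x,u,v\in L^p(Z)$ with $\|u\|=\|v\|=r>0$. Assume that $B_r(x+u)\cap B_r(-x-v)=\emptyset$ and $B_r(x-u)\cap B_r(-x+v)=\emptyset$. Then $$\|u-v\|^p\le 2^{p-1}p(p-1)r^{p-2}\|x\|^2\quad\text{if }p\in[2,\infty),\qquad \|u-v\|^2\le\frac{8}{p(p-1)}r^{2-p}\|x\|^p\quad\text{if }p\in(1,2].$$
   Context: $\|\cdot\|$ denotes the $L^p(Z)$ norm and $B_r(y)=\{w\in L^p(Z):\|w-y\|<r\}$ the open ball. *)

theory Defs
  imports "HOL-Analysis.Analysis"
begin

text \<open>Real L^p(Z), represented by measurable representatives; the norm and balls only
depend on a.e. classes, so working with representatives is faithful.\<close>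

definition Lp_space :: "'a measure \<Rightarrow> real \<Rightarrow> ('a \<Rightarrow> real) set" where
  "Lp_space M p = {f \<in> borel_measurable M. integrable M (\<lambda>z. \<bar>f z\<bar> powr p)}"

definition Lp_norm :: "'a measure \<Rightarrow> real \<Rightarrow> ('a \<Rightarrow> real) \<Rightarrow> real" where
  "Lp_norm M p f = (\<integral>z. \<bar>f z\<bar> powr p \<partial>M) powr (1 / p)"

definition Lp_ball :: "'a measure \<Rightarrow> real \<Rightarrow> ('a \<Rightarrow> real) \<Rightarrow> real \<Rightarrow> ('a \<Rightarrow> real) set" where
  "Lp_ball M p y r = {w \<in> Lp_space M p. Lp_norm M p (\<lambda>z. w z - y z) < r}"

end

theory Submission
  imports Defs
begin

definition J :: "real \<Rightarrow> real \<Rightarrow> real" where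
  "J p c = sgn c * \<bar>c\<bar> powr (p - 1)"

lemma pow_grad_ge2:
  fixes p a c :: real
  assumes "2 \<le> p" "0 \<le> a" "a \<le> c"
  shows "c powr (p-1) - a powr (p-1) \<le> (p-1)*(c-a)* c powr (p-2)"
proof (cases "a = c")
  case True then show ?thesis by simp
next
  case False
  then have ac: "a < c" using assms by simp
  show ?thesis
  proof (cases "a = 0")
    case True
    have "c powr (p-1) = c * c powr (p-2)"
      using ac True by (simp add: powr_add[symmetric] add.commute powr_mult_base)
    also have "\<dots> \<le> (p-1) * c * c powr (p-2)"
      using assms ac True by (intro mult_right_mono) auto
    finally show ?thesis using True assms by simp
  next
    case False
    then have a0: "0 < a" using assms by simp
    have der: "\<And>t. a \<le> t \<Longrightarrow> t \<le> c \<Longrightarrow> ((\<lambda>t. t powr (p-1)) has_real_derivative (p-1) * t powr (p-1-1)) (at t)"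
      using a0 by (intro has_real_derivative_powr) auto
    obtain z where z: "a < z" "z < c" "c powr (p-1) - a powr (p-1) = (c - a) * ((p-1) * z powr (p-1-1))"
      using MVT2[OF ac der] by blast
    have "z powr (p-2) \<le> c powr (p-2)"
      using z a0 assms by (intro powr_mono2) auto
    then have "(c - a) * ((p-1) * z powr (p-2)) \<le> (c-a) * ((p-1) * c powr (p-2))"
      using ac assms by (intro mult_left_mono) auto
    then show ?thesis using z by (simp add: algebra_simps diff_diff_eq)
  qed
qed

lemma pow_grad_le2:
  fixes p a c :: real
  assumes "1 < p" "p \<le> 2" "0 \<le> a" "a \<le> c"
  shows "c powr (p-1) - a powr (p-1) \<ge> (p-1)*(c-a)* c powr (p-2)"
proof (cases "a = c")
  case True then show ?thesis by simp
next
  case False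
  then have ac: "a < c" using assms by simp
  show ?thesis
  proof (cases "a = 0")
    case True
    have "c powr (p-1) = c * c powr (p-2)"
      using ac True by (simp add: powr_add[symmetric] add.commute powr_mult_base)
    moreover have "(p-1) * c * c powr (p-2) \<le> c * c powr (p-2)"
      using assms ac True by (intro mult_right_mono) auto
    ultimately show ?thesis using True assms by simp
  next
    case False
    then have a0: "0 < a" using assms by simp
    have der: "\<And>t. a \<le> t \<Longrightarrow> t \<le> c \<Longrightarrow> ((\<lambda>t. t powr (p-1)) has_real_derivative (p-1) * t powr (p-1-1)) (at t)"
      using a0 by (intro has_real_derivative_powr) auto
    obtain z where z: "a < z" "z < c" "c powr (p-1) - a powr (p-1) = (c - a) * ((p-1) * z powr (p-1-1))"
      using MVT2[OF ac der] by blast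
    have "c powr (p-2) \<le> z powr (p-2)"
      using z a0 assms by (intro powr_mono2') auto
    then have "(c - a) * ((p-1) * c powr (p-2)) \<le> (c-a) * ((p-1) * z powr (p-2))"
      using ac assms by (intro mult_left_mono) auto
    then show ?thesis using z by (simp add: algebra_simps diff_diff_eq)
  qed
qed

lemma powr_split: "0 \<le> t \<Longrightarrow> (t::real) powr (p-1) = t * t powr (p-2)"
  by (cases "t = 0") (simp_all add: powr_add[symmetric] add.commute powr_mult_base)

lemma J_nonneg: "0 \<le> t \<Longrightarrow> J p t = t powr (p-1)"
  by (cases "t = 0") (auto simp: J_def)

lemma J_nonpos: "t \<le> 0 \<Longrightarrow> J p t = - (\<bar>t\<bar> powr (p-1))"
  by (cases "t = 0") (auto simp: J_def)

lemma J_diff_ge2: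
  assumes "2 \<le> p" "a \<le> c"
  shows "J p c - J p a \<le> (p-1)*(c-a)*(max \<bar>a\<bar> \<bar>c\<bar>) powr (p-2)"
proof -
  consider "0 \<le> a" | "c \<le> 0" | "a < 0" "0 < c" by linarith
  then show ?thesis
  proof cases
    case 1
    then show ?thesis using pow_grad_ge2[OF assms(1) 1 assms(2)] assms
      by (simp add: J_nonneg max_def)
  next
    case 2
    have "\<bar>a\<bar> powr (p-1) - \<bar>c\<bar> powr (p-1) \<le> (p-1)*(\<bar>a\<bar>-\<bar>c\<bar>)* \<bar>a\<bar> powr (p-2)"
      using pow_grad_ge2[OF assms(1), of "\<bar>c\<bar>" "\<bar>a\<bar>"] 2 assms by simp
    then show ?thesis using 2 assms by (simp add: J_nonpos max_def)
  next
    case 3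
    define m where "m = max \<bar>a\<bar> \<bar>c\<bar>"
    have "c powr (p-1) \<le> (p-1) * c * m powr (p-2)"
    proof -
      have "c powr (p-1) = c * c powr (p-2)" using 3 powr_split by simp
      also have "\<dots> \<le> c * m powr (p-2)" using 3 assms by (intro mult_left_mono powr_mono2) (auto simp: m_def)
      also have "\<dots> \<le> (p-1) * c * m powr (p-2)" using 3 assms by (intro mult_right_mono) auto
      finally show ?thesis .
    qed
    moreover have "\<bar>a\<bar> powr (p-1) \<le> (p-1) * \<bar>a\<bar> * m powr (p-2)"
    proof -
      have "\<bar>a\<bar> powr (p-1) = \<bar>a\<bar> * \<bar>a\<bar> powr (p-2)" using powr_split by simp
      also have "\<dots> \<le> \<bar>a\<bar> * m powr (p-2)" using 3 assms by (intro mult_left_mono powr_mono2) (auto simp: m_def)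
      also have "\<dots> \<le> (p-1) * \<bar>a\<bar> * m powr (p-2)" using 3 assms by (intro mult_right_mono) auto
      finally show ?thesis .
    qed
    moreover have "J p c - J p a = c powr (p-1) + \<bar>a\<bar> powr (p-1)" using 3 by (simp add: J_nonneg J_nonpos)
    moreover have "(p-1)*(c-a)*m powr (p-2) = (p-1) * c * m powr (p-2) + (p-1) * \<bar>a\<bar> * m powr (p-2)"
      using 3 by (simp add: algebra_simps)
    ultimately show ?thesis unfolding m_def[symmetric] by linarith
  qed
qed

lemma J_diff_le2:
  assumes "1 < p" "p \<le> 2" "a \<le> c"
  shows "J p c - J p a \<ge> (p-1)*(c-a)*(max \<bar>a\<bar> \<bar>c\<bar>) powr (p-2)"
proof -
  consider "0 \<le> a" | "c \<le> 0" | "a < 0" "0 < c" by linarith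
  then show ?thesis
  proof cases
    case 1
    then show ?thesis using pow_grad_le2[OF assms(1,2) 1 assms(3)] assms
      by (simp add: J_nonneg max_def)
  next
    case 2
    have "\<bar>a\<bar> powr (p-1) - \<bar>c\<bar> powr (p-1) \<ge> (p-1)*(\<bar>a\<bar>-\<bar>c\<bar>)* \<bar>a\<bar> powr (p-2)"
      using pow_grad_le2[OF assms(1,2), of "\<bar>c\<bar>" "\<bar>a\<bar>"] 2 assms by simp
    then show ?thesis using 2 assms by (simp add: J_nonpos max_def)
  next
    case 3
    define m where "m = max \<bar>a\<bar> \<bar>c\<bar>"
    have m0: "0 < m" using 3 by (auto simp: m_def)
    have "c powr (p-1) \<ge> (p-1) * c * m powr (p-2)"
    proof -
      have "(p-1) * c * m powr (p-2) \<le> c * m powr (p-2)" using 3 assms by (intro mult_right_mono) auto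
      also have "\<dots> \<le> c * c powr (p-2)" using 3 assms by (intro mult_left_mono powr_mono2') (auto simp: m_def)
      also have "\<dots> = c powr (p-1)" using 3 powr_split by simp
      finally show ?thesis .
    qed
    moreover have "\<bar>a\<bar> powr (p-1) \<ge> (p-1) * \<bar>a\<bar> * m powr (p-2)"
    proof -
      have "(p-1) * \<bar>a\<bar> * m powr (p-2) \<le> \<bar>a\<bar> * m powr (p-2)" using 3 assms by (intro mult_right_mono) auto
      also have "\<dots> \<le> \<bar>a\<bar> * \<bar>a\<bar> powr (p-2)" using 3 assms by (intro mult_left_mono powr_mono2') (auto simp: m_def)
      also have "\<dots> = \<bar>a\<bar> powr (p-1)" using powr_split by simp
      finally show ?thesis .
    qed
    moreover have "J p c - J p a = c powr (p-1) + \<bar>a\<bar> powr (p-1)" using 3 by (simp add: J_nonneg J_nonpos)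
    moreover have "(p-1)*(c-a)*m powr (p-2) = (p-1) * c * m powr (p-2) + (p-1) * \<bar>a\<bar> * m powr (p-2)"
      using 3 by (simp add: algebra_simps)
    ultimately show ?thesis unfolding m_def[symmetric] by linarith
  qed
qed

lemma J_mono:
  assumes "1 < p" "a \<le> c"
  shows "J p a \<le> J p c"
proof -
  consider "0 \<le> a" | "c \<le> 0" | "a < 0" "0 < c" by linarith
  then show ?thesis
  proof cases
    case 1 then show ?thesis using assms by (simp add: J_nonneg powr_mono2)
  next
    case 2 then show ?thesis using assms by (simp add: J_nonpos powr_mono2)
  next
    case 3
    have "J p a \<le> 0" using 3 by (simp add: J_nonpos)
    moreover have "0 \<le> J p c" using 3 by (simp add: J_nonneg)
    ultimately show ?thesis by linarith
  qed
qed

lemma deriv_phi: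
  assumes "1 < p"
  shows "((\<lambda>c. \<bar>c\<bar> powr p) has_real_derivative p * J p c) (at c)"
proof -
  consider "0 < c" | "c < 0" | "c = 0" by linarith
  then show ?thesis
  proof cases
    case 1
    have ev: "eventually (\<lambda>t. \<bar>t\<bar> powr p = t powr p) (nhds c)"
      using eventually_nhds_in_open[of "{0<..}" c] 1
      by (auto elim!: eventually_mono)
    show ?thesis
      apply (subst DERIV_cong_ev[OF refl ev refl])
      using has_real_derivative_powr[OF 1, of p] 1 by (simp add: J_nonneg)
  next
    case 2
    have ev: "eventually (\<lambda>t. \<bar>t\<bar> powr p = (-t) powr p) (nhds c)"
      using eventually_nhds_in_open[of "{..<0}" c] 2
      by (auto elim!: eventually_mono)
    have "((\<lambda>t. (-t) powr p) has_real_derivative p * (-c) powr (p-1) * (-1)) (at c)"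
      using 2 by (auto intro!: derivative_eq_intros)
    then show ?thesis
      apply (subst DERIV_cong_ev[OF refl ev refl])
      using 2 by (simp add: J_nonpos)
  next
    case 3
    have "((\<lambda>h. (\<bar>0 + h\<bar> powr p - \<bar>0\<bar> powr p) / h) \<longlongrightarrow> 0) (at 0)"
    proof (rule Lim_null_comparison)
      show "\<forall>\<^sub>F h in at 0. norm ((\<bar>0 + h\<bar> powr p - \<bar>0\<bar> powr p) / h) \<le> \<bar>h\<bar> powr (p-1)"
      proof (intro always_eventually allI)
        fix h :: real
        show "norm ((\<bar>0 + h\<bar> powr p - \<bar>0\<bar> powr p) / h) \<le> \<bar>h\<bar> powr (p-1)"
          by (cases "h = 0") (simp_all add: powr_diff abs_divide)
      qed
      show "((\<lambda>h. \<bar>h\<bar> powr (p-1)) \<longlongrightarrow> 0) (at 0)"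
        using assms by (intro tendsto_zero_powrI tendsto_intros) (auto intro: tendsto_rabs_zero)
    qed
    then show ?thesis using 3 by (simp add: has_field_derivative_iff J_def)
  qed
qed

lemma abs_between:
  fixes a e \<sigma> :: real
  assumes "0 \<le> \<sigma>" "\<sigma> \<le> 1"
  shows "\<bar>a + \<sigma>*e\<bar> \<le> max \<bar>a\<bar> \<bar>a+e\<bar>"
proof -
  have "a + \<sigma>*e = (1-\<sigma>)*a + \<sigma>*(a+e)" by (simp add: algebra_simps)
  then have "\<bar>a + \<sigma>*e\<bar> \<le> (1-\<sigma>)*\<bar>a\<bar> + \<sigma>*\<bar>a+e\<bar>"
    using assms by (metis abs_mult abs_of_nonneg abs_triangle_ineq diff_ge_0_iff_ge)
  also have "\<dots> \<le> (1-\<sigma>)*max \<bar>a\<bar> \<bar>a+e\<bar> + \<sigma>*max \<bar>a\<bar> \<bar>a+e\<bar>"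
    using assms by (intro add_mono mult_left_mono) auto
  finally show ?thesis by (simp add: algebra_simps)
qed

lemma deriv_psi_part:
  assumes "1 < p"
  shows "((\<lambda>\<sigma>. \<bar>a + \<sigma>*e\<bar> powr p) has_real_derivative p * J p (a + \<sigma>*e) * e) (at \<sigma>)"
proof -
  have "((\<lambda>\<sigma>. a + \<sigma>*e) has_real_derivative e) (at \<sigma>)"
    by (auto intro!: derivative_eq_intros)
  from DERIV_chain2[OF deriv_phi[OF assms] this] show ?thesis by simp
qed

lemma taylor_ge2:
  assumes "2 \<le> p"
  shows "\<bar>a+e\<bar> powr p - \<bar>a\<bar> powr p - p * J p a * e \<le> p*(p-1)/2 * e^2 * (max \<bar>a\<bar> \<bar>a+e\<bar>) powr (p-2)"
proof -
  define M0 where "M0 = (max \<bar>a\<bar> \<bar>a+e\<bar>) powr (p-2)"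
  define \<psi> where "\<psi> = (\<lambda>\<sigma>. \<bar>a+\<sigma>*e\<bar> powr p - \<bar>a\<bar> powr p - p*J p a*\<sigma>*e - p*(p-1)/2*\<sigma>^2*e^2*M0)"
  have p1: "1 < p" using assms by simp
  have D: "(\<psi> has_real_derivative (p * J p (a + \<sigma>*e) * e - p*J p a*e - p*(p-1)/2*(2*\<sigma>)*e^2*M0)) (at \<sigma>)" for \<sigma>
  proof -
    have d2: "((\<lambda>\<sigma>. p*J p a*\<sigma>*e) has_real_derivative p*J p a*e) (at \<sigma>)"
      by (auto intro!: derivative_eq_intros)
    have d3: "((\<lambda>\<sigma>. p*(p-1)/2*\<sigma>^2*e^2*M0) has_real_derivative p*(p-1)/2*(2*\<sigma>)*e^2*M0) (at \<sigma>)"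
      by (auto intro!: derivative_eq_intros)
    show ?thesis unfolding \<psi>_def
      using DERIV_diff[OF DERIV_diff[OF DERIV_diff[OF deriv_psi_part[OF p1, of a e \<sigma>] DERIV_const[of "\<bar>a\<bar> powr p"]] d2] d3]
      by simp
  qed
  have "\<psi> 1 \<le> \<psi> 0"
  proof (rule DERIV_nonpos_imp_nonincreasing[of 0 1])
    fix \<sigma> :: real assume s: "0 \<le> \<sigma>" "\<sigma> \<le> 1"
    define c where "c = a + \<sigma>*e"
    have cM: "max \<bar>a\<bar> \<bar>c\<bar> \<le> max \<bar>a\<bar> \<bar>a+e\<bar>" using abs_between[OF s, of a e] by (auto simp: c_def)
    have mM: "(max \<bar>a\<bar> \<bar>c\<bar>) powr (p-2) \<le> M0"
      unfolding M0_def using cM assms by (intro powr_mono2) auto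
    have key: "e * (J p c - J p a) \<le> (p-1)*\<sigma>*e^2*M0"
    proof (cases "0 \<le> e")
      case True
      then have "a \<le> c" using s by (simp add: c_def)
      from J_diff_ge2[OF assms this]
      have "J p c - J p a \<le> (p-1)*(\<sigma>*e)*(max \<bar>a\<bar> \<bar>c\<bar>) powr (p-2)" by (simp add: c_def)
      also have "\<dots> \<le> (p-1)*(\<sigma>*e)*M0" using mM s True assms by (intro mult_left_mono) auto
      finally show ?thesis using True by (simp add: mult_left_mono power2_eq_square mult_ac)
          (metis mult.left_commute mult_left_mono)
    next
      case False
      then have "c \<le> a" using s by (simp add: c_def mult_nonneg_nonpos)
      from J_diff_ge2[OF assms this]
      have "J p a - J p c \<le> (p-1)*(-\<sigma>*e)*(max \<bar>c\<bar> \<bar>a\<bar>) powr (p-2)" by (simp add: c_def)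
      also have "\<dots> \<le> (p-1)*(-\<sigma>*e)*M0" using mM s False assms
        by (intro mult_left_mono) (auto simp: max.commute mult_nonneg_nonpos)
      finally have "J p a - J p c \<le> (p-1)*(-\<sigma>*e)*M0" .
      then have "(-e) * (J p a - J p c) \<le> (-e) * ((p-1)*(-\<sigma>*e)*M0)"
        using False by (intro mult_left_mono) auto
      then show ?thesis by (simp add: power2_eq_square algebra_simps)
    qed
    show "\<exists>y. (\<psi> has_real_derivative y) (at \<sigma>) \<and> y \<le> 0"
    proof (intro exI conjI)
      show "(\<psi> has_real_derivative (p * J p (a + \<sigma>*e) * e - p*J p a*e - p*(p-1)/2*(2*\<sigma>)*e^2*M0)) (at \<sigma>)" by (rule D)
      have "p * J p (a + \<sigma>*e) * e - p*J p a*e - p*(p-1)/2*(2*\<sigma>)*e^2*M0 = p * (e * (J p c - J p a) - (p-1)*\<sigma>*e^2*M0)"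
        by (simp add: c_def field_simps)
      also have "\<dots> \<le> 0" using key assms by (simp add: mult_nonneg_nonpos)
      finally show "p * J p (a + \<sigma>*e) * e - p*J p a*e - p*(p-1)/2*(2*\<sigma>)*e^2*M0 \<le> 0" .
    qed
  qed simp
  then show ?thesis by (simp add: \<psi>_def M0_def)
qed

lemma taylor_le2:
  assumes "1 < p" "p \<le> 2"
  shows "\<bar>a+e\<bar> powr p - \<bar>a\<bar> powr p - p * J p a * e \<ge> p*(p-1)/2 * e^2 * (max \<bar>a\<bar> \<bar>a+e\<bar>) powr (p-2)"
proof -
  define M0 where "M0 = (max \<bar>a\<bar> \<bar>a+e\<bar>) powr (p-2)"
  define \<psi> where "\<psi> = (\<lambda>\<sigma>. \<bar>a+\<sigma>*e\<bar> powr p - \<bar>a\<bar> powr p - p*J p a*\<sigma>*e - p*(p-1)/2*\<sigma>^2*e^2*M0)"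
  have p1: "1 < p" using assms by simp
  have D: "(\<psi> has_real_derivative (p * J p (a + \<sigma>*e) * e - p*J p a*e - p*(p-1)/2*(2*\<sigma>)*e^2*M0)) (at \<sigma>)" for \<sigma>
  proof -
    have d2: "((\<lambda>\<sigma>. p*J p a*\<sigma>*e) has_real_derivative p*J p a*e) (at \<sigma>)"
      by (auto intro!: derivative_eq_intros)
    have d3: "((\<lambda>\<sigma>. p*(p-1)/2*\<sigma>^2*e^2*M0) has_real_derivative p*(p-1)/2*(2*\<sigma>)*e^2*M0) (at \<sigma>)"
      by (auto intro!: derivative_eq_intros)
    show ?thesis unfolding \<psi>_def
      using DERIV_diff[OF DERIV_diff[OF DERIV_diff[OF deriv_psi_part[OF p1, of a e \<sigma>] DERIV_const[of "\<bar>a\<bar> powr p"]] d2] d3]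
      by simp
  qed
  have "\<psi> 0 \<le> \<psi> 1"
  proof (rule DERIV_nonneg_imp_nondecreasing[of 0 1])
    fix \<sigma> :: real assume s: "0 \<le> \<sigma>" "\<sigma> \<le> 1"
    define c where "c = a + \<sigma>*e"
    have cM: "max \<bar>a\<bar> \<bar>c\<bar> \<le> max \<bar>a\<bar> \<bar>a+e\<bar>" using abs_between[OF s, of a e] by (auto simp: c_def)
    have key: "e * (J p c - J p a) \<ge> (p-1)*\<sigma>*e^2*M0"
    proof (cases "max \<bar>a\<bar> \<bar>c\<bar> = 0")
      case True
      then have "a = 0" "c = 0" by auto
      then have "\<sigma>*e = 0" by (simp add: c_def)
      then have z: "(p-1)*\<sigma>*e^2*M0 = 0" by (simp add: power2_eq_square)
      have "e * (J p c - J p a) = 0" using \<open>a = 0\<close> \<open>c = 0\<close> by (simp add: J_def)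
      then show ?thesis using z by linarith
    next
      case False
      then have m0: "0 < max \<bar>a\<bar> \<bar>c\<bar>" by (metis abs_ge_zero max_def order_le_less)
      have mM: "M0 \<le> (max \<bar>a\<bar> \<bar>c\<bar>) powr (p-2)"
        unfolding M0_def using cM m0 assms by (intro powr_mono2') auto
      show ?thesis
      proof (cases "0 \<le> e")
        case True
        then have "a \<le> c" using s by (simp add: c_def)
        have "(p-1)*(\<sigma>*e)*M0 \<le> (p-1)*(\<sigma>*e)*(max \<bar>a\<bar> \<bar>c\<bar>) powr (p-2)"
          using mM s True assms by (intro mult_left_mono) auto
        also have "\<dots> \<le> J p c - J p a" using J_diff_le2[OF assms \<open>a \<le> c\<close>] by (simp add: c_def)
        finally have "(p-1)*(\<sigma>*e)*M0 \<le> J p c - J p a" .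
        then have "e * ((p-1)*(\<sigma>*e)*M0) \<le> e * (J p c - J p a)"
          using True by (intro mult_left_mono) auto
        then show ?thesis by (simp add: power2_eq_square algebra_simps)
      next
        case False
        then have "c \<le> a" using s by (simp add: c_def mult_nonneg_nonpos)
        have "(p-1)*(-\<sigma>*e)*M0 \<le> (p-1)*(-\<sigma>*e)*(max \<bar>c\<bar> \<bar>a\<bar>) powr (p-2)"
          using mM s False assms by (intro mult_left_mono) (auto simp: max.commute mult_nonneg_nonpos)
        also have "\<dots> \<le> J p a - J p c" using J_diff_le2[OF assms \<open>c \<le> a\<close>] by (simp add: c_def)
        finally have "(p-1)*(-\<sigma>*e)*M0 \<le> J p a - J p c" .
        then have "(-e) * ((p-1)*(-\<sigma>*e)*M0) \<le> (-e) * (J p a - J p c)"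
          using False by (intro mult_left_mono) auto
        then show ?thesis by (simp add: power2_eq_square algebra_simps)
      qed
    qed
    show "\<exists>y. (\<psi> has_real_derivative y) (at \<sigma>) \<and> y \<ge> 0"
    proof (intro exI conjI)
      show "(\<psi> has_real_derivative (p * J p (a + \<sigma>*e) * e - p*J p a*e - p*(p-1)/2*(2*\<sigma>)*e^2*M0)) (at \<sigma>)" by (rule D)
      have "p * J p (a + \<sigma>*e) * e - p*J p a*e - p*(p-1)/2*(2*\<sigma>)*e^2*M0 = p * (e * (J p c - J p a) - (p-1)*\<sigma>*e^2*M0)"
        by (simp add: c_def field_simps)
      also have "\<dots> \<ge> 0" using key assms by simp
      finally show "p * J p (a + \<sigma>*e) * e - p*J p a*e - p*(p-1)/2*(2*\<sigma>)*e^2*M0 \<ge> 0" .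
    qed
  qed simp
  then show ?thesis by (simp add: \<psi>_def M0_def)
qed



lemma phi_convex:
  assumes "1 < p"
  shows "convex_on UNIV (\<lambda>c::real. \<bar>c\<bar> powr p)"
  by (rule convex_on_realI[where f'="\<lambda>c. p * J p c"])
     (use assms deriv_phi J_mono in auto)

lemma phi_convex_comb:
  fixes a b l :: real
  assumes "1 < p" "0 \<le> l" "l \<le> 1"
  shows "\<bar>l*a + (1-l)*b\<bar> powr p \<le> l * \<bar>a\<bar> powr p + (1-l) * \<bar>b\<bar> powr p"
  using convex_onD[OF phi_convex[OF assms(1)], of "1-l" a b] assms by (simp add: algebra_simps)

lemma powr_split': "0 \<le> t \<Longrightarrow> (t::real) powr s = t * t powr (s-1)"
  by (cases "t = 0") (simp_all add: powr_add[symmetric] powr_mult_base)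

lemma abs_powr_sq: "\<bar>t::real\<bar> powr p = (t^2) powr (p/2)"
proof -
  have "(t^2) powr (p/2) = (\<bar>t\<bar> powr 2) powr (p/2)" by simp
  also have "\<dots> = \<bar>t\<bar> powr p" by (subst powr_powr) simp
  finally show ?thesis by simp
qed

lemma superadd:
  fixes x y s :: real
  assumes "1 \<le> s" "0 \<le> x" "0 \<le> y"
  shows "x powr s + y powr s \<le> (x+y) powr s"
proof -
  have "x powr s = x * x powr (s-1)" using assms powr_split' by blast
  also have "\<dots> \<le> x * (x+y) powr (s-1)" using assms by (intro mult_left_mono powr_mono2) auto
  finally have 1: "x powr s \<le> x * (x+y) powr (s-1)" .
  have "y powr s = y * y powr (s-1)" using assms powr_split' by blast
  also have "\<dots> \<le> y * (x+y) powr (s-1)" using assms by (intro mult_left_mono powr_mono2) auto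
  finally have 2: "y powr s \<le> y * (x+y) powr (s-1)" .
  have "(x+y) powr s = (x+y) * (x+y) powr (s-1)" using assms powr_split'[of "x+y" s] by simp
  then show ?thesis using 1 2 by (simp add: algebra_simps)
qed

lemma subadd:
  fixes x y s :: real
  assumes "0 < s" "s \<le> 1" "0 \<le> x" "0 \<le> y"
  shows "(x+y) powr s \<le> x powr s + y powr s"
proof -
  have 1: "x * (x+y) powr (s-1) \<le> x powr s"
  proof (cases "x = 0")
    case False
    then have "x * (x+y) powr (s-1) \<le> x * x powr (s-1)" using assms by (intro mult_left_mono powr_mono2') auto
    also have "\<dots> = x powr s" using assms powr_split'[of x s] by simp
    finally show ?thesis .
  qed simp
  have 2: "y * (x+y) powr (s-1) \<le> y powr s"
  proof (cases "y = 0")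
    case False
    then have "y * (x+y) powr (s-1) \<le> y * y powr (s-1)" using assms by (intro mult_left_mono powr_mono2') auto
    also have "\<dots> = y powr s" using assms powr_split'[of y s] by simp
    finally show ?thesis .
  qed simp
  have "(x+y) powr s = (x+y) * (x+y) powr (s-1)" using assms powr_split'[of "x+y" s] by simp
  then show ?thesis using 1 2 by (simp add: algebra_simps)
qed

lemma concave_mid:
  fixes X Y s :: real
  assumes "0 < s" "s \<le> 1" "0 \<le> X" "0 \<le> Y"
  shows "(X powr s + Y powr s)/2 \<le> ((X+Y)/2) powr s"
proof (cases "X + Y = 0")
  case True
  then have "X = 0" "Y = 0" using assms by auto
  then show ?thesis by simp
next
  case False
  define A where "A = (X+Y)/2"
  have A0: "0 < A" using False assms by (simp add: A_def)
  have yg: "Z powr s * A powr (1-s) \<le> s*Z + (1-s)*A" if "0 \<le> Z" for Z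
  proof (cases "Z = 0")
    case True then show ?thesis using assms A0 by simp
  next
    case False
    then show ?thesis using Youngs_inequality_0[of s "1-s" Z A] assms A0 that by simp
  qed
  have "(X powr s + Y powr s) * A powr (1-s) \<le> s*X + (1-s)*A + (s*Y + (1-s)*A)"
    using yg[of X] yg[of Y] assms by (simp add: algebra_simps)
  also have "\<dots> = 2 * A" by (simp add: A_def algebra_simps)
  also have "\<dots> = 2 * (A powr s * A powr (1-s))" using A0 by (simp add: powr_add[symmetric])
  finally have "(X powr s + Y powr s) * A powr (1-s) \<le> (2 * A powr s) * A powr (1-s)" by simp
  then have "X powr s + Y powr s \<le> 2 * A powr s" using A0 by (simp add: mult_le_cancel_right)
  then show ?thesis by (simp add: A_def)
qed

lemma clarkson_ge2:
  fixes a b p :: real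
  assumes "2 \<le> p"
  shows "\<bar>(a+b)/2\<bar> powr p + \<bar>(a-b)/2\<bar> powr p \<le> (\<bar>a\<bar> powr p + \<bar>b\<bar> powr p)/2"
proof -
  define s where "s = p/2"
  have s1: "1 \<le> s" using assms by (simp add: s_def)
  have "\<bar>(a+b)/2\<bar> powr p + \<bar>(a-b)/2\<bar> powr p = (((a+b)/2)^2) powr s + (((a-b)/2)^2) powr s"
    by (simp only: abs_powr_sq s_def)
  also have "\<dots> \<le> (((a+b)/2)^2 + ((a-b)/2)^2) powr s" by (rule superadd) (use s1 in auto)
  also have "((a+b)/2)^2 + ((a-b)/2)^2 = (a^2 + b^2)/2" by (simp add: power2_eq_square field_simps)
  also have "((a^2 + b^2)/2) powr s \<le> ((a^2) powr s + (b^2) powr s)/2"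
  proof (cases "s = 1")
    case True then show ?thesis by simp
  next
    case False
    then have "1 < s" using s1 by simp
    from phi_convex_comb[OF this, of "1/2" "a^2" "b^2"] show ?thesis by (simp add: field_simps)
  qed
  also have "((a^2) powr s + (b^2) powr s)/2 = (\<bar>a\<bar> powr p + \<bar>b\<bar> powr p)/2" by (simp only: abs_powr_sq s_def)
  finally show ?thesis .
qed

lemma clarkson_le2:
  fixes a b p :: real
  assumes "1 < p" "p \<le> 2"
  shows "\<bar>a+b\<bar> powr p + \<bar>a-b\<bar> powr p \<le> 2 * \<bar>a\<bar> powr p + 2 * \<bar>b\<bar> powr p"
proof -
  define s where "s = p/2"
  have s1: "0 < s" "s \<le> 1" using assms by (simp_all add: s_def)
  have "\<bar>a+b\<bar> powr p + \<bar>a-b\<bar> powr p = ((a+b)^2) powr s + ((a-b)^2) powr s"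
    by (simp only: abs_powr_sq s_def)
  also have "\<dots> \<le> 2 * (((a+b)^2 + (a-b)^2)/2) powr s" using concave_mid[OF s1, of "(a+b)^2" "(a-b)^2"] by simp
  also have "((a+b)^2 + (a-b)^2)/2 = a^2 + b^2" by (simp add: power2_eq_square field_simps)
  also have "2 * (a^2 + b^2) powr s \<le> 2 * ((a^2) powr s + (b^2) powr s)"
    using subadd[OF s1, of "a^2" "b^2"] by simp
  also have "\<dots> = 2 * \<bar>a\<bar> powr p + 2 * \<bar>b\<bar> powr p" by (simp only: abs_powr_sq s_def distrib_left)
  finally show ?thesis .
qed

lemma telescope_grid:
  fixes \<Phi> :: "real \<Rightarrow> real"
  assumes "0 < n" and step: "\<And>i. i < n \<Longrightarrow> \<Phi> (s + real (Suc i) * (L / real n)) - \<Phi> (s + real i * (L / real n)) \<le> c"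
  shows "\<Phi> (s + L) - \<Phi> s \<le> real n * c"
proof -
  let ?f = "\<lambda>i. \<Phi> (s + real i * (L / real n))"
  have "(\<Sum>i<n. ?f (Suc i) - ?f i) = ?f n - ?f 0" by (rule sum_lessThan_telescope)
  also have "?f n = \<Phi> (s + L)" using assms by simp
  also have "?f 0 = \<Phi> s" by simp
  finally have "\<Phi> (s + L) - \<Phi> s = (\<Sum>i<n. ?f (Suc i) - ?f i)" by simp
  also have "\<dots> \<le> (\<Sum>i<n. c)" by (rule sum_mono) (use step in auto)
  also have "\<dots> = real n * c" by simp
  finally show ?thesis .
qed

lemma choose_n:
  fixes L \<eta> :: real
  assumes "0 < L" "0 < \<eta>"
  obtains n :: nat where "0 < n" "L / real n < \<eta>"
proof -
  obtain n :: nat where n: "L / \<eta> < real n" using reals_Archimedean2 by blast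
  have "0 < real n" using n assms by (smt (verit) divide_pos_pos)
  then have "0 < n" by simp
  moreover have "L / real n < \<eta>" using n assms \<open>0 < real n\<close>
    by (simp add: field_simps)
  ultimately show ?thesis using that by blast
qed

lemma grid_fwd:
  fixes g D e :: "real \<Rightarrow> real" and K a b s t :: real
  assumes U: "\<And>s t. s \<in> {a..b} \<Longrightarrow> t \<in> {a..b} \<Longrightarrow> g t \<le> g s + D s * (t-s) + K/2*(t-s)^2 + e \<bar>t-s\<bar>"
    and E: "\<And>\<epsilon>. \<epsilon> > 0 \<Longrightarrow> \<exists>\<eta>>0. \<forall>h. 0 < h \<and> h < \<eta> \<longrightarrow> e h \<le> \<epsilon> * h^2"
    and st: "a \<le> s" "s \<le> t" "t \<le> b"
  shows "g t \<le> g s + D s*(t-s) + K/2*(t-s)^2"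
proof -
  have step1: "D t1 - D s1 \<le> (K + 2*\<epsilon>) * (t1 - s1)"
    if "a \<le> s1" "s1 < t1" "t1 \<le> b" "e (t1 - s1) \<le> \<epsilon> * (t1-s1)^2" for s1 t1 \<epsilon>
  proof -
    define h where "h = t1 - s1"
    have h0: "0 < h" using that by (simp add: h_def)
    have 1: "g t1 \<le> g s1 + D s1 * h + K/2*h^2 + e h"
      using U[of s1 t1] that by (simp add: h_def)
    have 2: "g s1 \<le> g t1 + D t1 * (-h) + K/2*h^2 + e h"
      using U[of t1 s1] that by (simp add: h_def power2_commute abs_minus_commute)
    have "(D t1 - D s1) * h \<le> K * h^2 + 2 * e h" using 1 2 by (simp add: algebra_simps)
    also have "\<dots> \<le> K * h^2 + 2 * (\<epsilon> * h^2)" using that by (simp add: h_def)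
    finally have "(D t1 - D s1) * h \<le> ((K + 2*\<epsilon>) * h) * h" by (simp add: power2_eq_square algebra_simps)
    then show ?thesis using h0 by (simp add: h_def)
  qed
  have Dmono: "D t' - D s' \<le> K * (t' - s')" if "a \<le> s'" "s' \<le> t'" "t' \<le> b" for s' t'
  proof (cases "s' = t'")
    case True then show ?thesis by simp
  next
    case False
    define L where "L = t' - s'"
    have L0: "0 < L" using False that by (simp add: L_def)
    show ?thesis
    proof (rule field_le_epsilon)
      fix \<epsilon> :: real assume \<epsilon>: "0 < \<epsilon>"
      obtain \<eta> where \<eta>: "\<eta> > 0" "\<And>h. 0 < h \<Longrightarrow> h < \<eta> \<Longrightarrow> e h \<le> (\<epsilon>/(2*L)) * h^2"
        using E[of "\<epsilon>/(2*L)"] \<epsilon> L0 by auto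
      obtain n where n: "0 < n" "L / real n < \<eta>" using choose_n[OF L0 \<eta>(1)] by blast
      define \<delta> where "\<delta> = L / real n"
      have \<delta>0: "0 < \<delta>" using n L0 by (simp add: \<delta>_def)
      have "(\<lambda>\<tau>. D \<tau> - K * \<tau>) (s' + L) - (\<lambda>\<tau>. D \<tau> - K * \<tau>) s' \<le> real n * (2 * (\<epsilon>/(2*L)) * \<delta>)"
      proof (rule telescope_grid[OF n(1)])
        fix i assume i: "i < n"
        define s1 where "s1 = s' + real i * (L / real n)"
        define t1 where "t1 = s' + real (Suc i) * (L / real n)"
        have t1s1: "t1 - s1 = \<delta>" by (simp add: s1_def t1_def \<delta>_def algebra_simps add_divide_distrib)
        have nn: "real i * (L / real n) \<ge> 0" using L0 by simp
        have le: "real (Suc i) * (L / real n) \<le> L"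
        proof -
          have "real (Suc i) \<le> real n" using i by simp
          then have "real (Suc i) * (L / real n) \<le> real n * (L / real n)" using L0 by (intro mult_right_mono) auto
          then show ?thesis using n by simp
        qed
        have tL: "t' = s' + L" by (simp add: L_def)
        have rng: "a \<le> s1" "s1 < t1" "t1 \<le> b"
          using that t1s1 \<delta>0 nn le tL unfolding s1_def t1_def by linarith+
        have "e (t1 - s1) \<le> (\<epsilon>/(2*L)) * (t1 - s1)^2" using \<eta>(2)[of "t1 - s1"] t1s1 \<delta>0 n by (simp add: \<delta>_def)
        from step1[OF rng this] t1s1
        have "D t1 - D s1 \<le> (K + 2*(\<epsilon>/(2*L))) * \<delta>" by simp
        then show "(D t1 - K * t1) - (D s1 - K * s1) \<le> 2 * (\<epsilon>/(2*L)) * \<delta>"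
          using t1s1 by (simp add: algebra_simps)
      qed
      also have "real n * (2 * (\<epsilon>/(2*L)) * \<delta>) = \<epsilon>" using n L0 by (simp add: \<delta>_def field_simps)
      finally show "D t' - D s' \<le> K * (t' - s') + \<epsilon>" by (simp add: L_def algebra_simps)
    qed
  qed
  show ?thesis
  proof (cases "s = t")
    case True then show ?thesis by simp
  next
    case False
    define L where "L = t - s"
    have L0: "0 < L" using False st by (simp add: L_def)
    define \<Phi> where "\<Phi> = (\<lambda>\<tau>. g \<tau> - D s * (\<tau> - s) - K/2 * (\<tau> - s)^2)"
    have "\<Phi> t - \<Phi> s \<le> 0"
    proof (rule field_le_epsilon)
      fix \<epsilon> :: real assume \<epsilon>: "0 < \<epsilon>"
      obtain \<eta> where \<eta>: "\<eta> > 0" "\<And>h. 0 < h \<Longrightarrow> h < \<eta> \<Longrightarrow> e h \<le> (\<epsilon>/L^2) * h^2"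
        using E[of "\<epsilon>/L^2"] \<epsilon> L0 by auto
      obtain n where n: "0 < n" "L / real n < \<eta>" using choose_n[OF L0 \<eta>(1)] by blast
      define \<delta> where "\<delta> = L / real n"
      have \<delta>0: "0 < \<delta>" using n L0 by (simp add: \<delta>_def)
      have "\<Phi> (s + L) - \<Phi> s \<le> real n * ((\<epsilon>/L^2) * \<delta>^2)"
      proof (rule telescope_grid[OF n(1)])
        fix i assume i: "i < n"
        define s1 where "s1 = s + real i * (L / real n)"
        define t1 where "t1 = s + real (Suc i) * (L / real n)"
        have t1s1: "t1 - s1 = \<delta>" by (simp add: s1_def t1_def \<delta>_def algebra_simps add_divide_distrib)
        have nn: "real i * (L / real n) \<ge> 0" using L0 by simp
        have le: "real (Suc i) * (L / real n) \<le> L"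
        proof -
          have "real (Suc i) \<le> real n" using i by simp
          then have "real (Suc i) * (L / real n) \<le> real n * (L / real n)" using L0 by (intro mult_right_mono) auto
          then show ?thesis using n by simp
        qed
        have tL: "t = s + L" by (simp add: L_def)
        have rng: "a \<le> s1" "s1 < t1" "t1 \<le> b" "s \<le> s1"
          using st t1s1 \<delta>0 nn le tL unfolding s1_def t1_def by linarith+
        have e1: "e \<delta> \<le> (\<epsilon>/L^2) * \<delta>^2" using \<eta>(2)[of \<delta>] \<delta>0 n by (simp add: \<delta>_def)
        have u1: "g t1 \<le> g s1 + D s1 * \<delta> + K/2*\<delta>^2 + e \<delta>"
          using U[of s1 t1] rng t1s1 \<delta>0 by simp
        have dm: "D s1 \<le> D s + K * (s1 - s)" using Dmono[of s s1] rng st by simp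
        have "D s1 * \<delta> \<le> (D s + K * (s1 - s)) * \<delta>" using dm \<delta>0 by (intro mult_right_mono) auto
        then have "g t1 - g s1 \<le> (D s + K * (s1 - s)) * \<delta> + K/2*\<delta>^2 + (\<epsilon>/L^2) * \<delta>^2"
          using u1 e1 by linarith
        moreover have "\<Phi> t1 - \<Phi> s1 = g t1 - g s1 - D s * \<delta> - K/2 * ((t1 - s)^2 - (s1 - s)^2)"
          by (simp add: \<Phi>_def t1s1[symmetric] algebra_simps)
        moreover have "(t1 - s)^2 - (s1 - s)^2 = 2 * (s1 - s) * \<delta> + \<delta>^2"
          using t1s1 by (simp add: power2_eq_square algebra_simps)
        ultimately show "\<Phi> t1 - \<Phi> s1 \<le> (\<epsilon>/L^2) * \<delta>^2"
          by (simp add: algebra_simps)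
      qed
      also have "real n * ((\<epsilon>/L^2) * \<delta>^2) = \<epsilon> / real n" using n L0 by (simp add: \<delta>_def field_simps power2_eq_square)
      also have "\<dots> \<le> \<epsilon>" using n \<epsilon> by (simp add: divide_le_eq)
      finally show "\<Phi> t - \<Phi> s \<le> 0 + \<epsilon>" by (simp add: L_def)
    qed
    then show ?thesis by (simp add: \<Phi>_def)
  qed
qed

lemma grid_bwd:
  fixes g D e :: "real \<Rightarrow> real" and K a b s t :: real
  assumes U: "\<And>s t. s \<in> {a..b} \<Longrightarrow> t \<in> {a..b} \<Longrightarrow> g t \<le> g s + D s * (t-s) + K/2*(t-s)^2 + e \<bar>t-s\<bar>"
    and E: "\<And>\<epsilon>. \<epsilon> > 0 \<Longrightarrow> \<exists>\<eta>>0. \<forall>h. 0 < h \<and> h < \<eta> \<longrightarrow> e h \<le> \<epsilon> * h^2"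
    and st: "a \<le> t" "t \<le> s" "s \<le> b"
  shows "g t \<le> g s + D s*(t-s) + K/2*(t-s)^2"
proof -
  have U': "(\<lambda>\<tau>. g (-\<tau>)) t' \<le> (\<lambda>\<tau>. g (-\<tau>)) s' + (\<lambda>\<tau>. - D (-\<tau>)) s' * (t'-s') + K/2*(t'-s')^2 + e \<bar>t'-s'\<bar>"
    if "s' \<in> {-b..-a}" "t' \<in> {-b..-a}" for s' t'
    using U[of "-s'" "-t'"] that by (simp add: algebra_simps power2_commute abs_minus_commute)
  have "(\<lambda>\<tau>. g (-\<tau>)) (-t) \<le> (\<lambda>\<tau>. g (-\<tau>)) (-s) + (\<lambda>\<tau>. - D (-\<tau>)) (-s) * ((-t)-(-s)) + K/2*((-t)-(-s))^2"
    by (rule grid_fwd[where e=e and a="-b" and b="-a", OF U' E]) (use st in auto)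
  then show ?thesis by (simp add: algebra_simps power2_commute)
qed

lemma young_pair:
  fixes a b \<alpha> \<beta> p :: real
  assumes "0 \<le> a" "0 \<le> b" "0 \<le> \<alpha>" "0 \<le> \<beta>" "\<alpha> + \<beta> = p"
  shows "a powr \<alpha> * b powr \<beta> \<le> a powr p + b powr p"
proof -
  define m where "m = max a b"
  have m0: "0 \<le> m" using assms by (simp add: m_def)
  have "a powr \<alpha> * b powr \<beta> \<le> m powr \<alpha> * m powr \<beta>"
    using assms by (intro mult_mono powr_mono2) (auto simp: m_def)
  also have "\<dots> \<le> m powr p"
  proof (cases "m = 0")
    case False
    then show ?thesis using assms m0 by (simp add: powr_add[symmetric])
  qed simp
  also have "\<dots> \<le> a powr p + b powr p"
    by (cases "a \<le> b") (auto simp: m_def max_def)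
  finally show ?thesis .
qed

lemma abs_sum_powr:
  fixes X Y p :: real
  assumes "0 \<le> p"
  shows "\<bar>X + Y\<bar> powr p \<le> 2 powr p * (\<bar>X\<bar> powr p + \<bar>Y\<bar> powr p)"
proof -
  have "\<bar>X + Y\<bar> \<le> 2 * max \<bar>X\<bar> \<bar>Y\<bar>" using abs_triangle_ineq[of X Y] by (auto simp: max_def)
  then have "\<bar>X + Y\<bar> powr p \<le> (2 * max \<bar>X\<bar> \<bar>Y\<bar>) powr p" using assms by (intro powr_mono2) auto
  also have "\<dots> = 2 powr p * (max \<bar>X\<bar> \<bar>Y\<bar>) powr p" by (simp add: powr_mult)
  also have "\<dots> \<le> 2 powr p * (\<bar>X\<bar> powr p + \<bar>Y\<bar> powr p)"
    by (intro mult_left_mono) (auto simp: max_def)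
  finally show ?thesis .
qed

lemma Lp_spaceD:
  assumes "f \<in> Lp_space M p"
  shows "f \<in> borel_measurable M" "integrable M (\<lambda>z. \<bar>f z\<bar> powr p)"
  using assms by (auto simp: Lp_space_def)

lemma Lp_lin:
  assumes f: "f \<in> Lp_space M p" and g: "g \<in> Lp_space M p" and p: "0 < p"
  shows "(\<lambda>z. a * f z + b * g z) \<in> Lp_space M p"
proof -
  note [measurable] = Lp_spaceD(1)[OF f] Lp_spaceD(1)[OF g]
  have m: "(\<lambda>z. a * f z + b * g z) \<in> borel_measurable M" by measurable
  have i: "integrable M (\<lambda>z. 2 powr p * (\<bar>a\<bar> powr p * \<bar>f z\<bar> powr p + \<bar>b\<bar> powr p * \<bar>g z\<bar> powr p))"
    using Lp_spaceD(2)[OF f] Lp_spaceD(2)[OF g] by auto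
  have "integrable M (\<lambda>z. \<bar>a * f z + b * g z\<bar> powr p)"
  proof (rule Bochner_Integration.integrable_bound[OF i])
    show "(\<lambda>z. \<bar>a * f z + b * g z\<bar> powr p) \<in> borel_measurable M" by measurable
    show "AE z in M. norm (\<bar>a * f z + b * g z\<bar> powr p) \<le> norm (2 powr p * (\<bar>a\<bar> powr p * \<bar>f z\<bar> powr p + \<bar>b\<bar> powr p * \<bar>g z\<bar> powr p))"
    proof (intro AE_I2)
      fix z
      have "\<bar>a * f z + b * g z\<bar> powr p \<le> 2 powr p * (\<bar>a * f z\<bar> powr p + \<bar>b * g z\<bar> powr p)"
        using abs_sum_powr p by simp
      also have "\<dots> = 2 powr p * (\<bar>a\<bar> powr p * \<bar>f z\<bar> powr p + \<bar>b\<bar> powr p * \<bar>g z\<bar> powr p)"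
        by (simp add: abs_mult powr_mult)
      finally show "norm (\<bar>a * f z + b * g z\<bar> powr p) \<le> norm (2 powr p * (\<bar>a\<bar> powr p * \<bar>f z\<bar> powr p + \<bar>b\<bar> powr p * \<bar>g z\<bar> powr p))"
        by simp
    qed
  qed
  with m show ?thesis by (simp add: Lp_space_def)
qed

lemma Lp_prod_integrable:
  assumes f: "f \<in> Lp_space M p" and g: "g \<in> Lp_space M p" and "0 \<le> \<alpha>" "0 \<le> \<beta>" "\<alpha> + \<beta> = p"
  shows "integrable M (\<lambda>z. \<bar>f z\<bar> powr \<alpha> * \<bar>g z\<bar> powr \<beta>)"
proof (rule Bochner_Integration.integrable_bound)
  note [measurable] = Lp_spaceD(1)[OF f] Lp_spaceD(1)[OF g]
  show "integrable M (\<lambda>z. \<bar>f z\<bar> powr p + \<bar>g z\<bar> powr p)"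
    using Lp_spaceD(2)[OF f] Lp_spaceD(2)[OF g] by auto
  show "(\<lambda>z. \<bar>f z\<bar> powr \<alpha> * \<bar>g z\<bar> powr \<beta>) \<in> borel_measurable M" by measurable
  show "AE z in M. norm (\<bar>f z\<bar> powr \<alpha> * \<bar>g z\<bar> powr \<beta>) \<le> norm (\<bar>f z\<bar> powr p + \<bar>g z\<bar> powr p)"
    using young_pair[of "\<bar>f _\<bar>" "\<bar>g _\<bar>" \<alpha> \<beta> p] assms by auto
qed

lemma amgm:
  fixes F G \<theta> :: real
  assumes "0 \<le> F" "0 \<le> G" "0 < \<theta>" "\<theta> \<le> 1"
  shows "F powr \<theta> * G powr (1-\<theta>) \<le> \<theta>*F + (1-\<theta>)*G"
proof (cases "F = 0 \<or> G = 0")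
  case True
  then show ?thesis using assms by auto
next
  case False
  then show ?thesis using Youngs_inequality_0[of \<theta> "1-\<theta>" F G] assms by simp
qed

lemma holder:
  fixes F G :: "'a \<Rightarrow> real"
  assumes iF: "integrable M F" and iG: "integrable M G"
    and F0: "\<And>z. z \<in> space M \<Longrightarrow> 0 \<le> F z" and G0: "\<And>z. z \<in> space M \<Longrightarrow> 0 \<le> G z"
    and th: "0 < \<theta>" "\<theta> \<le> 1"
  shows "(\<integral>z. F z powr \<theta> * G z powr (1-\<theta>) \<partial>M) \<le> (integral\<^sup>L M F) powr \<theta> * (integral\<^sup>L M G) powr (1-\<theta>)"
proof -
  define A where "A = integral\<^sup>L M F"
  define B where "B = integral\<^sup>L M G"
  have A0: "0 \<le> A" unfolding A_def using F0 by (intro integral_nonneg_AE) auto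
  have B0: "0 \<le> B" unfolding B_def using G0 by (intro integral_nonneg_AE) auto
  show ?thesis
  proof (cases "A = 0 \<or> B = 0")
    case True
    have "AE z in M. F z powr \<theta> * G z powr (1-\<theta>) = 0"
    proof (cases "A = 0")
      case True
      then have "AE z in M. F z = 0" using integral_nonneg_eq_0_iff_AE[OF iF] F0 unfolding A_def by auto
      then show ?thesis by eventually_elim simp
    next
      case False
      then have "B = 0" using True by simp
      then have "AE z in M. G z = 0" using integral_nonneg_eq_0_iff_AE[OF iG] G0 unfolding B_def by auto
      then show ?thesis by eventually_elim simp
    qed
    then have "(\<integral>z. F z powr \<theta> * G z powr (1-\<theta>) \<partial>M) = 0" by (rule integral_eq_zero_AE)
    then show ?thesis by (simp add: A_def[symmetric] B_def[symmetric])
  next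
    case False
    then have Ap: "0 < A" and Bp: "0 < B" using A0 B0 by auto
    define c where "c = A powr \<theta> * B powr (1-\<theta>)"
    have c0: "0 \<le> c" by (simp add: c_def)
    have pw: "F z powr \<theta> * G z powr (1-\<theta>) \<le> c * \<theta> / A * F z + c * (1-\<theta>) / B * G z"
      if z: "z \<in> space M" for z
    proof -
      have "(F z / A) powr \<theta> * (G z / B) powr (1-\<theta>) \<le> \<theta> * (F z / A) + (1-\<theta>) * (G z / B)"
        using amgm[of "F z / A" "G z / B" \<theta>] F0[OF z] G0[OF z] Ap Bp th by auto
      moreover have "(F z / A) powr \<theta> * (G z / B) powr (1-\<theta>) = (F z powr \<theta> * G z powr (1-\<theta>)) / c"
        using F0[OF z] G0[OF z] Ap Bp by (simp add: powr_divide c_def)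
      moreover have "0 < c" using Ap Bp by (simp add: c_def)
      ultimately have "F z powr \<theta> * G z powr (1-\<theta>) \<le> c * (\<theta> * (F z / A) + (1-\<theta>) * (G z / B))"
        by (simp add: divide_le_eq mult.commute)
      then show ?thesis by (simp add: algebra_simps)
    qed
    have "(\<integral>z. F z powr \<theta> * G z powr (1-\<theta>) \<partial>M) \<le> (\<integral>z. c * \<theta> / A * F z + c * (1-\<theta>) / B * G z \<partial>M)"
    proof (rule integral_mono')
      show "integrable M (\<lambda>z. c * \<theta> / A * F z + c * (1-\<theta>) / B * G z)" using iF iG by auto
      show "\<And>z. z \<in> space M \<Longrightarrow> 0 \<le> c * \<theta> / A * F z + c * (1-\<theta>) / B * G z"
        using F0 G0 c0 th Ap Bp by (intro add_nonneg_nonneg mult_nonneg_nonneg divide_nonneg_nonneg) auto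
    qed (rule pw)
    also have "\<dots> = c * \<theta> / A * A + c * (1-\<theta>) / B * B"
      using iF iG by (simp add: A_def B_def)
    also have "\<dots> = c" using Ap Bp by (simp add: field_simps)
    finally show ?thesis by (simp add: c_def A_def B_def)
  qed
qed

lemma sq_M_bound:
  fixes e m p :: real
  assumes "\<bar>e\<bar> \<le> 2*m"
  shows "e^2 * m powr (p-2) \<le> 4 * m powr p"
proof (cases "m = 0")
  case True then show ?thesis using assms by simp
next
  case False
  then have m0: "0 < m" using assms by linarith
  have "e^2 \<le> (2*m)^2" using assms by (metis abs_ge_zero power2_abs power_mono)
  then have "e^2 * m powr (p-2) \<le> (2*m)^2 * m powr (p-2)" by (intro mult_right_mono) auto
  also have "(2*m)^2 * m powr (p-2) = 4 * (m powr 2 * m powr (p-2))" using m0 by (simp add: power2_eq_square)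
  also have "m powr 2 * m powr (p-2) = m powr p"
  proof -
    have "m powr p = m powr (2 + (p-2))" by simp
    also have "\<dots> = m powr 2 * m powr (p-2)" by (rule powr_add)
    finally show ?thesis by simp
  qed
  finally show ?thesis .
qed

lemma abs_J_le: "\<bar>J p a\<bar> \<le> \<bar>a\<bar> powr (p-1)"
  by (simp add: J_def abs_mult abs_sgn_eq)

lemma seg_integrable:
  assumes a: "a \<in> Lp_space M p" and b: "b \<in> Lp_space M p" and p: "1 < p"
  shows "integrable M (\<lambda>z. p * J p (a z) * (b z - a z))"
    and "integrable M (\<lambda>z. (max \<bar>a z\<bar> \<bar>b z\<bar>) powr p)"
    and "integrable M (\<lambda>z. (b z - a z)^2 * (max \<bar>a z\<bar> \<bar>b z\<bar>) powr (p-2))"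
proof -
  note [measurable] = Lp_spaceD(1)[OF a] Lp_spaceD(1)[OF b]
  have eL: "(\<lambda>z. b z - a z) \<in> Lp_space M p" using Lp_lin[OF b a, of 1 "-1"] p by simp
  have iM: "integrable M (\<lambda>z. \<bar>a z\<bar> powr p + \<bar>b z\<bar> powr p)"
    using Lp_spaceD(2)[OF a] Lp_spaceD(2)[OF b] by auto
  show "integrable M (\<lambda>z. p * J p (a z) * (b z - a z))"
  proof (rule Bochner_Integration.integrable_bound)
    show "integrable M (\<lambda>z. p * (\<bar>a z\<bar> powr (p-1) * \<bar>b z - a z\<bar> powr 1))"
      using Lp_prod_integrable[OF a eL, of "p-1" 1] p by auto
    show "(\<lambda>z. p * J p (a z) * (b z - a z)) \<in> borel_measurable M" unfolding J_def by measurable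
    show "AE z in M. norm (p * J p (a z) * (b z - a z)) \<le> norm (p * (\<bar>a z\<bar> powr (p-1) * \<bar>b z - a z\<bar> powr 1))"
    proof (intro AE_I2)
      fix z
      have "\<bar>J p (a z) * (b z - a z)\<bar> \<le> \<bar>a z\<bar> powr (p-1) * \<bar>b z - a z\<bar>"
        unfolding abs_mult by (intro mult_right_mono abs_J_le) auto
      then show "norm (p * J p (a z) * (b z - a z)) \<le> norm (p * (\<bar>a z\<bar> powr (p-1) * \<bar>b z - a z\<bar> powr 1))"
        using p by (simp add: abs_mult)
    qed
  qed
  show iMax: "integrable M (\<lambda>z. (max \<bar>a z\<bar> \<bar>b z\<bar>) powr p)"
  proof (rule Bochner_Integration.integrable_bound[OF iM])
    show "(\<lambda>z. (max \<bar>a z\<bar> \<bar>b z\<bar>) powr p) \<in> borel_measurable M" by measurable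
    show "AE z in M. norm ((max \<bar>a z\<bar> \<bar>b z\<bar>) powr p) \<le> norm (\<bar>a z\<bar> powr p + \<bar>b z\<bar> powr p)"
      by (intro AE_I2) (auto simp: max_def)
  qed
  show "integrable M (\<lambda>z. (b z - a z)^2 * (max \<bar>a z\<bar> \<bar>b z\<bar>) powr (p-2))"
  proof (rule Bochner_Integration.integrable_bound)
    show "integrable M (\<lambda>z. 4 * (max \<bar>a z\<bar> \<bar>b z\<bar>) powr p)" using iMax by auto
    show "(\<lambda>z. (b z - a z)^2 * (max \<bar>a z\<bar> \<bar>b z\<bar>) powr (p-2)) \<in> borel_measurable M" by measurable
    show "AE z in M. norm ((b z - a z)^2 * (max \<bar>a z\<bar> \<bar>b z\<bar>) powr (p-2)) \<le> norm (4 * (max \<bar>a z\<bar> \<bar>b z\<bar>) powr p)"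
    proof (intro AE_I2)
      fix z
      have "\<bar>b z - a z\<bar> \<le> 2 * max \<bar>a z\<bar> \<bar>b z\<bar>" by (auto simp: max_def)
      from sq_M_bound[OF this, of p]
      show "norm ((b z - a z)^2 * (max \<bar>a z\<bar> \<bar>b z\<bar>) powr (p-2)) \<le> norm (4 * (max \<bar>a z\<bar> \<bar>b z\<bar>) powr p)"
        by simp
    qed
  qed
qed

lemma R_upper:
  assumes a: "a \<in> Lp_space M p" and b: "b \<in> Lp_space M p" and p: "2 \<le> p"
  shows "(\<integral>z. \<bar>b z\<bar> powr p \<partial>M) - (\<integral>z. \<bar>a z\<bar> powr p \<partial>M) - (\<integral>z. p * J p (a z) * (b z - a z) \<partial>M)
    \<le> p*(p-1)/2 * ((\<integral>z. \<bar>b z - a z\<bar> powr p \<partial>M) powr (2/p) * (\<integral>z. (max \<bar>a z\<bar> \<bar>b z\<bar>) powr p \<partial>M) powr (1 - 2/p))"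
proof -
  have p1: "1 < p" using p by simp
  note I = seg_integrable[OF a b p1]
  have eL: "(\<lambda>z. b z - a z) \<in> Lp_space M p" using Lp_lin[OF b a, of 1 "-1"] p by simp
  have "(\<integral>z. \<bar>b z\<bar> powr p \<partial>M) - (\<integral>z. \<bar>a z\<bar> powr p \<partial>M) - (\<integral>z. p * J p (a z) * (b z - a z) \<partial>M)
      = (\<integral>z. \<bar>b z\<bar> powr p - \<bar>a z\<bar> powr p - p * J p (a z) * (b z - a z) \<partial>M)"
    using Lp_spaceD(2)[OF a] Lp_spaceD(2)[OF b] I(1) by simp
  also have "\<dots> \<le> (\<integral>z. p*(p-1)/2 * ((b z - a z)^2 * (max \<bar>a z\<bar> \<bar>b z\<bar>) powr (p-2)) \<partial>M)"
  proof (rule integral_mono')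
    show "integrable M (\<lambda>z. p*(p-1)/2 * ((b z - a z)^2 * (max \<bar>a z\<bar> \<bar>b z\<bar>) powr (p-2)))"
      using I(3) by auto
    fix z
    show "0 \<le> p*(p-1)/2 * ((b z - a z)^2 * (max \<bar>a z\<bar> \<bar>b z\<bar>) powr (p-2))" using p by auto
    show "\<bar>b z\<bar> powr p - \<bar>a z\<bar> powr p - p * J p (a z) * (b z - a z) \<le> p*(p-1)/2 * ((b z - a z)^2 * (max \<bar>a z\<bar> \<bar>b z\<bar>) powr (p-2))"
      using taylor_ge2[OF p, of "a z" "b z - a z"] by (simp add: mult.assoc)
  qed
  also have "\<dots> = p*(p-1)/2 * (\<integral>z. (b z - a z)^2 * (max \<bar>a z\<bar> \<bar>b z\<bar>) powr (p-2) \<partial>M)" by simp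
  also have "(\<integral>z. (b z - a z)^2 * (max \<bar>a z\<bar> \<bar>b z\<bar>) powr (p-2) \<partial>M)
      = (\<integral>z. (\<bar>b z - a z\<bar> powr p) powr (2/p) * ((max \<bar>a z\<bar> \<bar>b z\<bar>) powr p) powr (1 - 2/p) \<partial>M)"
  proof (rule Bochner_Integration.integral_cong[OF refl])
    fix z assume "z \<in> space M"
    have "(\<bar>b z - a z\<bar> powr p) powr (2/p) = (b z - a z)^2"
      using p by (simp add: powr_powr)
    moreover have "((max \<bar>a z\<bar> \<bar>b z\<bar>) powr p) powr (1 - 2/p) = (max \<bar>a z\<bar> \<bar>b z\<bar>) powr (p-2)"
      using p by (simp add: powr_powr algebra_simps)
    ultimately show "(b z - a z)^2 * (max \<bar>a z\<bar> \<bar>b z\<bar>) powr (p-2) = (\<bar>b z - a z\<bar> powr p) powr (2/p) * ((max \<bar>a z\<bar> \<bar>b z\<bar>) powr p) powr (1 - 2/p)"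
      by simp
  qed
  also have "\<dots> \<le> (\<integral>z. \<bar>b z - a z\<bar> powr p \<partial>M) powr (2/p) * (\<integral>z. (max \<bar>a z\<bar> \<bar>b z\<bar>) powr p \<partial>M) powr (1 - 2/p)"
    by (rule holder[OF Lp_spaceD(2)[OF eL] I(2)]) (use p in auto)
  finally show ?thesis using p by (simp add: mult_left_mono)
qed

lemma holder_lower_pointwise:
  fixes e m p :: real
  assumes "\<bar>e\<bar> \<le> 2*m" "0 < p"
  shows "(e^2 * m powr (p-2)) powr (p/2) * (m powr p) powr (1 - p/2) = \<bar>e\<bar> powr p"
proof (cases "m = 0")
  case True
  then show ?thesis using assms by simp
next
  case False
  then have m0: "0 < m" using assms by linarith
  have "(e^2 * m powr (p-2)) powr (p/2) = (e^2) powr (p/2) * m powr ((p-2)*(p/2))"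
    by (simp add: powr_mult powr_powr)
  also have "(e^2) powr (p/2) = \<bar>e\<bar> powr p" by (simp add: abs_powr_sq)
  finally have 1: "(e^2 * m powr (p-2)) powr (p/2) = \<bar>e\<bar> powr p * m powr ((p-2)*(p/2))" .
  have 2: "(m powr p) powr (1 - p/2) = m powr (p * (1 - p/2))" by (simp add: powr_powr)
  have "m powr ((p-2)*(p/2)) * m powr (p * (1 - p/2)) = m powr ((p-2)*(p/2) + p * (1 - p/2))"
    by (simp add: powr_add)
  also have "(p-2)*(p/2) + p * (1 - p/2) = 0" by (simp add: field_simps)
  finally have 3: "m powr ((p-2)*(p/2)) * m powr (p * (1 - p/2)) = 1" using m0 by simp
  show ?thesis using 1 2 3 by (simp add: mult.assoc)
qed

lemma R_lower:
  assumes a: "a \<in> Lp_space M p" and b: "b \<in> Lp_space M p" and p: "1 < p" "p < 2"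
    and B': "(\<integral>z. (max \<bar>a z\<bar> \<bar>b z\<bar>) powr p \<partial>M) \<le> B'"
  shows "(\<integral>z. \<bar>b z\<bar> powr p \<partial>M) - (\<integral>z. \<bar>a z\<bar> powr p \<partial>M) - (\<integral>z. p * J p (a z) * (b z - a z) \<partial>M)
    \<ge> p*(p-1)/2 * ((\<integral>z. \<bar>b z - a z\<bar> powr p \<partial>M) powr (2/p) * B' powr ((p-2)/p))"
proof -
  note I = seg_integrable[OF a b p(1)]
  have eL: "(\<lambda>z. b z - a z) \<in> Lp_space M p" using Lp_lin[OF b a, of 1 "-1"] p by simp
  define A where "A = (\<integral>z. (b z - a z)^2 * (max \<bar>a z\<bar> \<bar>b z\<bar>) powr (p-2) \<partial>M)"
  define B where "B = (\<integral>z. (max \<bar>a z\<bar> \<bar>b z\<bar>) powr p \<partial>M)"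
  define E where "E = (\<integral>z. \<bar>b z - a z\<bar> powr p \<partial>M)"
  have A0: "0 \<le> A" unfolding A_def by (intro integral_nonneg_AE) auto
  have B0: "0 \<le> B" unfolding B_def by (intro integral_nonneg_AE) auto
  have E0: "0 \<le> E" unfolding E_def by (intro integral_nonneg_AE) auto
  have "(\<integral>z. \<bar>b z\<bar> powr p \<partial>M) - (\<integral>z. \<bar>a z\<bar> powr p \<partial>M) - (\<integral>z. p * J p (a z) * (b z - a z) \<partial>M)
      = (\<integral>z. \<bar>b z\<bar> powr p - \<bar>a z\<bar> powr p - p * J p (a z) * (b z - a z) \<partial>M)"
    using Lp_spaceD(2)[OF a] Lp_spaceD(2)[OF b] I(1) by simp
  also have "\<dots> \<ge> (\<integral>z. p*(p-1)/2 * ((b z - a z)^2 * (max \<bar>a z\<bar> \<bar>b z\<bar>) powr (p-2)) \<partial>M)"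
  proof (rule integral_mono)
    show "integrable M (\<lambda>z. p*(p-1)/2 * ((b z - a z)^2 * (max \<bar>a z\<bar> \<bar>b z\<bar>) powr (p-2)))"
      using I(3) by auto
    show "integrable M (\<lambda>z. \<bar>b z\<bar> powr p - \<bar>a z\<bar> powr p - p * J p (a z) * (b z - a z))"
      using Lp_spaceD(2)[OF a] Lp_spaceD(2)[OF b] I(1) by auto
    fix z
    show "p*(p-1)/2 * ((b z - a z)^2 * (max \<bar>a z\<bar> \<bar>b z\<bar>) powr (p-2)) \<le> \<bar>b z\<bar> powr p - \<bar>a z\<bar> powr p - p * J p (a z) * (b z - a z)"
      using taylor_le2[OF p(1) less_imp_le[OF p(2)], where a="a z" and e="b z - a z"] by (simp add: mult.assoc)
  qed
  also have "(\<integral>z. p*(p-1)/2 * ((b z - a z)^2 * (max \<bar>a z\<bar> \<bar>b z\<bar>) powr (p-2)) \<partial>M) = p*(p-1)/2 * A"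
    by (simp add: A_def)
  finally have L: "p*(p-1)/2 * A \<le> (\<integral>z. \<bar>b z\<bar> powr p \<partial>M) - (\<integral>z. \<bar>a z\<bar> powr p \<partial>M) - (\<integral>z. p * J p (a z) * (b z - a z) \<partial>M)" .
  have H: "E \<le> A powr (p/2) * B powr (1 - p/2)"
  proof -
    have "E = (\<integral>z. ((b z - a z)^2 * (max \<bar>a z\<bar> \<bar>b z\<bar>) powr (p-2)) powr (p/2) * ((max \<bar>a z\<bar> \<bar>b z\<bar>) powr p) powr (1 - p/2) \<partial>M)"
      unfolding E_def
    proof (rule Bochner_Integration.integral_cong[OF refl])
      fix z assume "z \<in> space M"
      have "\<bar>b z - a z\<bar> \<le> 2 * max \<bar>a z\<bar> \<bar>b z\<bar>" by (auto simp: max_def)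
      from holder_lower_pointwise[OF this, of p] p
      show "\<bar>b z - a z\<bar> powr p = ((b z - a z)^2 * (max \<bar>a z\<bar> \<bar>b z\<bar>) powr (p-2)) powr (p/2) * ((max \<bar>a z\<bar> \<bar>b z\<bar>) powr p) powr (1 - p/2)"
        by simp
    qed
    also have "\<dots> \<le> A powr (p/2) * B powr (1 - p/2)"
      unfolding A_def B_def by (rule holder[OF I(3) I(2)]) (use p in auto)
    finally show ?thesis .
  qed
  have key: "E powr (2/p) * B' powr ((p-2)/p) \<le> A"
  proof (cases "B' = 0")
    case True then show ?thesis using A0 by simp
  next
    case False
    then have Bp: "0 < B'" using B0 B' unfolding B_def[symmetric] by linarith
    have "B powr (1 - p/2) \<le> B' powr (1 - p/2)" using B0 B' p unfolding B_def[symmetric] by (intro powr_mono2) auto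
    then have "E \<le> A powr (p/2) * B' powr (1 - p/2)" using H by (smt (verit) mult_left_mono powr_ge_zero)
    then have "E powr (2/p) \<le> (A powr (p/2) * B' powr (1 - p/2)) powr (2/p)"
      using E0 p by (intro powr_mono2) auto
    also have "\<dots> = A * B' powr (2/p - 1)"
      using A0 p by (simp add: powr_mult powr_powr algebra_simps)
    finally have X: "E powr (2/p) * B' powr ((p-2)/p) \<le> A * B' powr (2/p - 1) * B' powr ((p-2)/p)"
      by (intro mult_right_mono) auto
    have one: "B' powr (2/p - 1) * B' powr ((p-2)/p) = 1"
    proof -
      have "B' powr (2/p - 1) * B' powr ((p-2)/p) = B' powr (2/p - 1 + (p-2)/p)" by (simp add: powr_add)
      also have "2/p - 1 + (p-2)/p = 0" using p by (simp add: field_simps)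
      finally show ?thesis using Bp by simp
    qed
    show ?thesis using X one by (simp add: mult.assoc)
  qed
  have "p*(p-1)/2 * (E powr (2/p) * B' powr ((p-2)/p)) \<le> p*(p-1)/2 * A"
    using key p by (intro mult_left_mono) auto
  with L show ?thesis by (simp add: E_def)
qed

definition gI :: "'a measure \<Rightarrow> real \<Rightarrow> ('a \<Rightarrow> real) \<Rightarrow> ('a \<Rightarrow> real) \<Rightarrow> real \<Rightarrow> real" where
  "gI M p f h t = (\<integral>z. \<bar>f z + t * h z\<bar> powr p \<partial>M)"

definition gD :: "'a measure \<Rightarrow> real \<Rightarrow> ('a \<Rightarrow> real) \<Rightarrow> ('a \<Rightarrow> real) \<Rightarrow> real \<Rightarrow> real" where
  "gD M p f h t = (\<integral>z. p * J p (f z + t * h z) * h z \<partial>M)"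

definition gC :: "'a measure \<Rightarrow> real \<Rightarrow> ('a \<Rightarrow> real) \<Rightarrow> ('a \<Rightarrow> real) \<Rightarrow> real" where
  "gC M p f h = p * (\<integral>z. \<bar>h z\<bar> * (\<bar>f z\<bar> + \<bar>h z\<bar>) powr (p-1) \<partial>M)"

lemma pow_diff_abs:
  fixes A B m p :: real
  assumes "1 \<le> p" "\<bar>A\<bar> \<le> m" "\<bar>B\<bar> \<le> m"
  shows "\<bar>\<bar>A\<bar> powr p - \<bar>B\<bar> powr p\<bar> \<le> p * \<bar>A - B\<bar> * m powr (p-1)"
proof -
  have gen: "Y powr p - X powr p \<le> p * (Y - X) * m powr (p-1)" if "0 \<le> X" "X \<le> Y" "Y \<le> m" for X Y
  proof -
    have "Y powr (p+1-1) - X powr (p+1-1) \<le> (p+1-1)*(Y-X)* Y powr (p+1-2)"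
      using pow_grad_ge2[of "p+1" X Y] that assms by simp
    then have "Y powr p - X powr p \<le> p*(Y-X)* Y powr (p-1)" by (simp add: algebra_simps)
    also have "\<dots> \<le> p*(Y-X)* m powr (p-1)"
      using that assms by (intro mult_left_mono powr_mono2) auto
    finally show ?thesis .
  qed
  show ?thesis
  proof (cases "\<bar>B\<bar> \<le> \<bar>A\<bar>")
    case True
    have "\<bar>A\<bar> powr p - \<bar>B\<bar> powr p \<le> p * (\<bar>A\<bar> - \<bar>B\<bar>) * m powr (p-1)" using gen[of "\<bar>B\<bar>" "\<bar>A\<bar>"] True assms by simp
    also have "\<dots> \<le> p * \<bar>A - B\<bar> * m powr (p-1)" using assms by (intro mult_right_mono mult_left_mono) auto
    finally have "\<bar>A\<bar> powr p - \<bar>B\<bar> powr p \<le> p * \<bar>A - B\<bar> * m powr (p-1)" .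
    moreover have "\<bar>B\<bar> powr p \<le> \<bar>A\<bar> powr p" using True assms by (intro powr_mono2) auto
    ultimately show ?thesis by simp
  next
    case False
    have "\<bar>B\<bar> powr p - \<bar>A\<bar> powr p \<le> p * (\<bar>B\<bar> - \<bar>A\<bar>) * m powr (p-1)" using gen[of "\<bar>A\<bar>" "\<bar>B\<bar>"] False assms by simp
    also have "\<dots> \<le> p * \<bar>A - B\<bar> * m powr (p-1)" using assms by (intro mult_right_mono mult_left_mono) auto
    finally have "\<bar>B\<bar> powr p - \<bar>A\<bar> powr p \<le> p * \<bar>A - B\<bar> * m powr (p-1)" .
    moreover have "\<bar>A\<bar> powr p \<le> \<bar>B\<bar> powr p" using False assms by (intro powr_mono2) auto
    ultimately show ?thesis by simp
  qed
qed

lemma abs_seg_le: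
  fixes f h s :: real
  assumes "\<bar>s\<bar> \<le> 1"
  shows "\<bar>f + s * h\<bar> \<le> \<bar>f\<bar> + \<bar>h\<bar>"
proof -
  have "\<bar>s * h\<bar> \<le> \<bar>h\<bar>" using assms by (simp add: abs_mult mult_left_le_one_le)
  then show ?thesis by (metis abs_triangle_ineq add_left_mono order_trans)
qed

lemma integrable_C:
  assumes f: "f \<in> Lp_space M p" and h: "h \<in> Lp_space M p" and p: "1 < p"
  shows "integrable M (\<lambda>z. \<bar>h z\<bar> * (\<bar>f z\<bar> + \<bar>h z\<bar>) powr (p-1))"
proof (rule Bochner_Integration.integrable_bound)
  note [measurable] = Lp_spaceD(1)[OF f] Lp_spaceD(1)[OF h]
  show "integrable M (\<lambda>z. \<bar>h z\<bar> powr p + 2 powr p * (\<bar>f z\<bar> powr p + \<bar>h z\<bar> powr p))"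
    using Lp_spaceD(2)[OF f] Lp_spaceD(2)[OF h] by auto
  show "(\<lambda>z. \<bar>h z\<bar> * (\<bar>f z\<bar> + \<bar>h z\<bar>) powr (p-1)) \<in> borel_measurable M" by measurable
  show "AE z in M. norm (\<bar>h z\<bar> * (\<bar>f z\<bar> + \<bar>h z\<bar>) powr (p-1)) \<le> norm (\<bar>h z\<bar> powr p + 2 powr p * (\<bar>f z\<bar> powr p + \<bar>h z\<bar> powr p))"
  proof (intro AE_I2)
    fix z
    have "\<bar>h z\<bar> * (\<bar>f z\<bar> + \<bar>h z\<bar>) powr (p-1) = \<bar>h z\<bar> powr 1 * \<bar>\<bar>f z\<bar> + \<bar>h z\<bar>\<bar> powr (p-1)" by simp
    also have "\<dots> \<le> \<bar>h z\<bar> powr p + \<bar>\<bar>f z\<bar> + \<bar>h z\<bar>\<bar> powr p"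
      using young_pair[of "\<bar>h z\<bar>" "\<bar>\<bar>f z\<bar> + \<bar>h z\<bar>\<bar>" 1 "p-1" p] p by simp
    also have "\<bar>\<bar>f z\<bar> + \<bar>h z\<bar>\<bar> powr p \<le> 2 powr p * (\<bar>f z\<bar> powr p + \<bar>h z\<bar> powr p)"
      using abs_sum_powr[of p "\<bar>f z\<bar>" "\<bar>h z\<bar>"] p by simp
    finally show "norm (\<bar>h z\<bar> * (\<bar>f z\<bar> + \<bar>h z\<bar>) powr (p-1)) \<le> norm (\<bar>h z\<bar> powr p + 2 powr p * (\<bar>f z\<bar> powr p + \<bar>h z\<bar> powr p))"
      by simp
  qed
qed

lemma seg_Lp:
  assumes f: "f \<in> Lp_space M p" and h: "h \<in> Lp_space M p" and p: "1 < p"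
  shows "(\<lambda>z. f z + s * h z) \<in> Lp_space M p"
  using Lp_lin[OF f h, of 1 s] p by simp

lemma seg_pointwise:
  fixes f h s t p :: real
  assumes "1 \<le> p" "\<bar>s\<bar> \<le> 1" "\<bar>t\<bar> \<le> 1"
  shows "\<bar>\<bar>f + t*h\<bar> powr p - \<bar>f + s*h\<bar> powr p\<bar> \<le> \<bar>t - s\<bar> * (p * (\<bar>h\<bar> * (\<bar>f\<bar> + \<bar>h\<bar>) powr (p-1)))"
proof -
  have "\<bar>\<bar>f + t*h\<bar> powr p - \<bar>f + s*h\<bar> powr p\<bar> \<le> p * \<bar>(f + t*h) - (f + s*h)\<bar> * (\<bar>f\<bar> + \<bar>h\<bar>) powr (p-1)"
    using pow_diff_abs[OF assms(1) abs_seg_le[OF assms(3)] abs_seg_le[OF assms(2)]] .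
  also have "\<bar>(f + t*h) - (f + s*h)\<bar> = \<bar>t - s\<bar> * \<bar>h\<bar>" by (simp add: algebra_simps abs_mult[symmetric])
  finally show ?thesis by (simp add: mult_ac)
qed

lemma gI_lip:
  assumes f: "f \<in> Lp_space M p" and h: "h \<in> Lp_space M p" and p: "1 < p"
    and st: "\<bar>s\<bar> \<le> 1" "\<bar>t\<bar> \<le> 1"
  shows "\<bar>gI M p f h t - gI M p f h s\<bar> \<le> gC M p f h * \<bar>t - s\<bar>"
proof -
  have it: "integrable M (\<lambda>z. \<bar>f z + t * h z\<bar> powr p)" using Lp_spaceD(2)[OF seg_Lp[OF f h p]] .
  have is': "integrable M (\<lambda>z. \<bar>f z + s * h z\<bar> powr p)" using Lp_spaceD(2)[OF seg_Lp[OF f h p]] .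
  have "gI M p f h t - gI M p f h s = (\<integral>z. \<bar>f z + t * h z\<bar> powr p - \<bar>f z + s * h z\<bar> powr p \<partial>M)"
    using it is' by (simp add: gI_def)
  also have "\<bar>\<dots>\<bar> \<le> (\<integral>z. \<bar>\<bar>f z + t * h z\<bar> powr p - \<bar>f z + s * h z\<bar> powr p\<bar> \<partial>M)"
    using integral_norm_bound[of M "\<lambda>z. \<bar>f z + t * h z\<bar> powr p - \<bar>f z + s * h z\<bar> powr p"] by simp
  also have "\<dots> \<le> (\<integral>z. \<bar>t - s\<bar> * (p * (\<bar>h z\<bar> * (\<bar>f z\<bar> + \<bar>h z\<bar>) powr (p-1))) \<partial>M)"
  proof (rule integral_mono')
    show "integrable M (\<lambda>z. \<bar>t - s\<bar> * (p * (\<bar>h z\<bar> * (\<bar>f z\<bar> + \<bar>h z\<bar>) powr (p-1))))"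
      using integrable_C[OF f h p] by auto
    fix z show "\<bar>\<bar>f z + t * h z\<bar> powr p - \<bar>f z + s * h z\<bar> powr p\<bar> \<le> \<bar>t - s\<bar> * (p * (\<bar>h z\<bar> * (\<bar>f z\<bar> + \<bar>h z\<bar>) powr (p-1)))"
      using seg_pointwise[of p s t "f z" "h z"] p st by simp
    show "0 \<le> \<bar>t - s\<bar> * (p * (\<bar>h z\<bar> * (\<bar>f z\<bar> + \<bar>h z\<bar>) powr (p-1)))" using p by simp
  qed
  also have "\<dots> = gC M p f h * \<bar>t - s\<bar>" by (simp add: gC_def)
  finally show ?thesis .
qed

lemma seg_max_bound:
  assumes f: "f \<in> Lp_space M p" and h: "h \<in> Lp_space M p" and p: "1 < p"
    and st: "\<bar>s\<bar> \<le> 1" "\<bar>t\<bar> \<le> 1"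
  shows "(\<integral>z. (max \<bar>f z + s * h z\<bar> \<bar>f z + t * h z\<bar>) powr p \<partial>M) \<le> gI M p f h s + gC M p f h * \<bar>t - s\<bar>"
proof -
  have "(\<integral>z. (max \<bar>f z + s * h z\<bar> \<bar>f z + t * h z\<bar>) powr p \<partial>M)
      \<le> (\<integral>z. \<bar>f z + s * h z\<bar> powr p + \<bar>t - s\<bar> * (p * (\<bar>h z\<bar> * (\<bar>f z\<bar> + \<bar>h z\<bar>) powr (p-1))) \<partial>M)"
  proof (rule integral_mono')
    show "integrable M (\<lambda>z. \<bar>f z + s * h z\<bar> powr p + \<bar>t - s\<bar> * (p * (\<bar>h z\<bar> * (\<bar>f z\<bar> + \<bar>h z\<bar>) powr (p-1))))"
      using Lp_spaceD(2)[OF seg_Lp[OF f h p]] integrable_C[OF f h p] by auto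
    fix z
    show "0 \<le> \<bar>f z + s * h z\<bar> powr p + \<bar>t - s\<bar> * (p * (\<bar>h z\<bar> * (\<bar>f z\<bar> + \<bar>h z\<bar>) powr (p-1)))"
      using p by simp
    have pw: "\<bar>\<bar>f z + t*h z\<bar> powr p - \<bar>f z + s*h z\<bar> powr p\<bar> \<le> \<bar>t - s\<bar> * (p * (\<bar>h z\<bar> * (\<bar>f z\<bar> + \<bar>h z\<bar>) powr (p-1)))"
      using seg_pointwise[of p s t "f z" "h z"] p st by simp
    show "(max \<bar>f z + s * h z\<bar> \<bar>f z + t * h z\<bar>) powr p \<le> \<bar>f z + s * h z\<bar> powr p + \<bar>t - s\<bar> * (p * (\<bar>h z\<bar> * (\<bar>f z\<bar> + \<bar>h z\<bar>) powr (p-1)))"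
    proof (cases "\<bar>f z + s * h z\<bar> \<le> \<bar>f z + t * h z\<bar>")
      case True
      then show ?thesis using abs_le_D1[OF pw] by (simp add: max_def)
    next
      case False
      then show ?thesis using pw p by (simp add: max_def)
    qed
  qed
  also have "\<dots> = gI M p f h s + gC M p f h * \<bar>t - s\<bar>"
    using Lp_spaceD(2)[OF seg_Lp[OF f h p]] integrable_C[OF f h p] by (simp add: gI_def gC_def)
  finally show ?thesis .
qed

lemma seg_terms:
  assumes f: "f \<in> Lp_space M p" and h: "h \<in> Lp_space M p" and p: "1 < p"
  shows "(\<integral>z. p * J p (f z + s * h z) * ((f z + t * h z) - (f z + s * h z)) \<partial>M) = gD M p f h s * (t - s)"
    and "(\<integral>z. \<bar>t * h z - s * h z\<bar> powr p \<partial>M) = \<bar>t - s\<bar> powr p * (\<integral>z. \<bar>h z\<bar> powr p \<partial>M)"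
proof -
  have "(\<integral>z. p * J p (f z + s * h z) * ((f z + t * h z) - (f z + s * h z)) \<partial>M) = (\<integral>z. (t - s) * (p * J p (f z + s * h z) * h z) \<partial>M)"
    by (rule Bochner_Integration.integral_cong) (auto simp: algebra_simps)
  also have "\<dots> = gD M p f h s * (t - s)" by (simp add: gD_def)
  finally show "(\<integral>z. p * J p (f z + s * h z) * ((f z + t * h z) - (f z + s * h z)) \<partial>M) = gD M p f h s * (t - s)" .
  have "(\<integral>z. \<bar>t * h z - s * h z\<bar> powr p \<partial>M) = (\<integral>z. \<bar>t - s\<bar> powr p * \<bar>h z\<bar> powr p \<partial>M)"
    by (rule Bochner_Integration.integral_cong) (auto simp: algebra_simps abs_mult[symmetric] powr_mult[symmetric])
  also have "\<dots> = \<bar>t - s\<bar> powr p * (\<integral>z. \<bar>h z\<bar> powr p \<partial>M)" by simp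
  finally show "(\<integral>z. \<bar>t * h z - s * h z\<bar> powr p \<partial>M) = \<bar>t - s\<bar> powr p * (\<integral>z. \<bar>h z\<bar> powr p \<partial>M)" .
qed

lemma sq_powr: "0 < p \<Longrightarrow> (\<bar>x::real\<bar> powr p * H) powr (2/p) = x^2 * H powr (2/p)"
  by (simp add: powr_mult powr_powr)

lemma seg_upper:
  assumes f: "f \<in> Lp_space M p" and h: "h \<in> Lp_space M p" and p: "2 \<le> p"
    and st: "\<bar>s\<bar> \<le> 1" "\<bar>t\<bar> \<le> 1"
  shows "gI M p f h t \<le> gI M p f h s + gD M p f h s * (t - s)
     + p*(p-1)/2 * ((t-s)^2 * (\<integral>z. \<bar>h z\<bar> powr p \<partial>M) powr (2/p) * (gI M p f h s + gC M p f h * \<bar>t - s\<bar>) powr (1 - 2/p))"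
proof -
  have p1: "1 < p" using p by simp
  note R = R_upper[OF seg_Lp[OF f h p1, of s] seg_Lp[OF f h p1, of t] p]
  note T = seg_terms[OF f h p1, where s=s and t=t]
  have mb: "(\<integral>z. (max \<bar>f z + s * h z\<bar> \<bar>f z + t * h z\<bar>) powr p \<partial>M) powr (1 - 2/p) \<le> (gI M p f h s + gC M p f h * \<bar>t - s\<bar>) powr (1 - 2/p)"
    using seg_max_bound[OF f h p1 st] p by (intro powr_mono2) (auto intro!: integral_nonneg_AE)
  have "gI M p f h t - gI M p f h s - gD M p f h s * (t - s)
      \<le> p*(p-1)/2 * ((\<bar>t - s\<bar> powr p * (\<integral>z. \<bar>h z\<bar> powr p \<partial>M)) powr (2/p) * (\<integral>z. (max \<bar>f z + s * h z\<bar> \<bar>f z + t * h z\<bar>) powr p \<partial>M) powr (1 - 2/p))"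
    using R unfolding T(1) by (simp add: gI_def T(2))
  also have "(\<bar>t - s\<bar> powr p * (\<integral>z. \<bar>h z\<bar> powr p \<partial>M)) powr (2/p) = (t-s)^2 * (\<integral>z. \<bar>h z\<bar> powr p \<partial>M) powr (2/p)"
    using p by (simp add: sq_powr)
  also have "p*(p-1)/2 * ((t-s)^2 * (\<integral>z. \<bar>h z\<bar> powr p \<partial>M) powr (2/p) * (\<integral>z. (max \<bar>f z + s * h z\<bar> \<bar>f z + t * h z\<bar>) powr p \<partial>M) powr (1 - 2/p))
      \<le> p*(p-1)/2 * ((t-s)^2 * (\<integral>z. \<bar>h z\<bar> powr p \<partial>M) powr (2/p) * (gI M p f h s + gC M p f h * \<bar>t - s\<bar>) powr (1 - 2/p))"
    using mb p by (intro mult_left_mono) auto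
  finally show ?thesis by simp
qed

lemma seg_lower:
  assumes f: "f \<in> Lp_space M p" and h: "h \<in> Lp_space M p" and p: "1 < p" "p < 2"
    and st: "\<bar>s\<bar> \<le> 1" "\<bar>t\<bar> \<le> 1"
  shows "gI M p f h t \<ge> gI M p f h s + gD M p f h s * (t - s)
     + p*(p-1)/2 * ((t-s)^2 * (\<integral>z. \<bar>h z\<bar> powr p \<partial>M) powr (2/p) * (gI M p f h s + gC M p f h * \<bar>t - s\<bar>) powr ((p-2)/p))"
proof -
  note R = R_lower[OF seg_Lp[OF f h p(1), of s] seg_Lp[OF f h p(1), of t] p seg_max_bound[OF f h p(1) st]]
  note T = seg_terms[OF f h p(1), where s=s and t=t]
  have "gI M p f h t - gI M p f h s - gD M p f h s * (t - s)
      \<ge> p*(p-1)/2 * ((\<bar>t - s\<bar> powr p * (\<integral>z. \<bar>h z\<bar> powr p \<partial>M)) powr (2/p) * (gI M p f h s + gC M p f h * \<bar>t - s\<bar>) powr ((p-2)/p))"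
    using R unfolding T(1) by (simp add: gI_def T(2))
  also have "(\<bar>t - s\<bar> powr p * (\<integral>z. \<bar>h z\<bar> powr p \<partial>M)) powr (2/p) = (t-s)^2 * (\<integral>z. \<bar>h z\<bar> powr p \<partial>M) powr (2/p)"
    using p by (simp add: sq_powr)
  finally show ?thesis by simp
qed

lemma first_hit:
  fixes g :: "real \<Rightarrow> real"
  assumes cont: "continuous_on {0..1} g" and g0: "g 0 < c" and g1: "c \<le> g 1"
  shows "\<exists>\<beta>. 0 < \<beta> \<and> \<beta> \<le> 1 \<and> g \<beta> = c \<and> (\<forall>t\<in>{0..\<beta>}. g t \<le> c)"
proof -
  define S where "S = {0..1} \<inter> g -` {c}"
  have cl: "closed S" unfolding S_def by (rule continuous_closed_preimage[OF cont]) auto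
  obtain x where x: "0 \<le> x" "x \<le> 1" "g x = c" using IVT'[of g 0 c 1] g0 g1 cont by auto
  have ne: "S \<noteq> {}" using x by (auto simp: S_def)
  have bdd: "bdd_below S" unfolding S_def by (auto intro: bdd_belowI[where m=0])
  define \<beta> where "\<beta> = Inf S"
  have bS: "\<beta> \<in> S" unfolding \<beta>_def by (rule closed_contains_Inf[OF ne bdd cl])
  have lower: "\<beta> \<le> t" if "t \<in> S" for t unfolding \<beta>_def by (rule cInf_lower[OF that bdd])
  have b01: "0 \<le> \<beta>" "\<beta> \<le> 1" "g \<beta> = c" using bS by (auto simp: S_def)
  have bpos: "0 < \<beta>" using b01 g0 by (cases "\<beta> = 0") auto
  have below: "g t \<le> c" if t: "t \<in> {0..\<beta>}" for t
  proof (rule ccontr)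
    assume "\<not> g t \<le> c"
    then have gt: "c < g t" by simp
    have "{0..t} \<subseteq> {0..1}" using t b01 by auto
    then have "continuous_on {0..t} g" by (rule continuous_on_subset[OF cont])
    then obtain t' where t': "0 \<le> t'" "t' \<le> t" "g t' = c" using IVT'[of g 0 c t] g0 gt t by auto
    have "t' \<in> S" using t' t b01 by (auto simp: S_def)
    then have "\<beta> \<le> t'" by (rule lower)
    then have "t = \<beta>" using t' t by auto
    then show False using gt b01 by simp
  qed
  show ?thesis using bpos b01 below by blast
qed

lemma E_small:
  fixes c A C \<theta> :: real
  assumes A: "0 < A" and c: "0 \<le> c" and eps: "0 < \<epsilon>"
  shows "\<exists>\<eta>>0. \<forall>h. 0 < h \<and> h < \<eta> \<longrightarrow> c * h^2 * \<bar>(A + C*h) powr \<theta> - A powr \<theta>\<bar> \<le> \<epsilon> * h^2"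
proof -
  have lim: "((\<lambda>h. (A + C*h) powr \<theta>) \<longlongrightarrow> (A + C*0) powr \<theta>) (at 0)"
    using A by (intro tendsto_intros) auto
  obtain s where s: "s > 0" "\<And>x. x \<noteq> 0 \<and> norm (x - 0) < s \<Longrightarrow> norm ((A + C*x) powr \<theta> - (A + C*0) powr \<theta>) < \<epsilon> / (c+1)"
  proof -
    have pos: "0 < \<epsilon>/(c+1)" using eps c by simp
    show ?thesis using LIM_D[OF lim pos] that by auto
  qed
  show ?thesis
  proof (intro exI conjI allI impI)
    show "0 < s" by (rule s(1))
    fix h :: real assume h: "0 < h \<and> h < s"
    then have "\<bar>(A + C*h) powr \<theta> - A powr \<theta>\<bar> < \<epsilon> / (c+1)" using s(2)[of h] by simp
    then have "c * \<bar>(A + C*h) powr \<theta> - A powr \<theta>\<bar> \<le> c * (\<epsilon> / (c+1))" using c by (intro mult_left_mono) auto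
    also have "\<dots> \<le> \<epsilon>" using c eps by (simp add: field_simps)
    finally have "c * \<bar>(A + C*h) powr \<theta> - A powr \<theta>\<bar> \<le> \<epsilon>" .
    then have "h^2 * (c * \<bar>(A + C*h) powr \<theta> - A powr \<theta>\<bar>) \<le> h^2 * \<epsilon>" by (intro mult_left_mono) auto
    then show "c * h^2 * \<bar>(A + C*h) powr \<theta> - A powr \<theta>\<bar> \<le> \<epsilon> * h^2" by (simp add: mult_ac)
  qed
qed

lemma gI_cont:
  assumes f: "f \<in> Lp_space M p" and h: "h \<in> Lp_space M p" and p: "1 < p"
  shows "continuous_on {-1..1} (gI M p f h)"
proof -
  have C0: "0 \<le> gC M p f h" unfolding gC_def using p by (intro mult_nonneg_nonneg integral_nonneg_AE) auto
  have "(gC M p f h)-lipschitz_on {-1..1} (gI M p f h)"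
  proof (rule lipschitz_onI)
    fix x y :: real assume "x \<in> {-1..1}" "y \<in> {-1..1}"
    then have "\<bar>x\<bar> \<le> 1" "\<bar>y\<bar> \<le> 1" by auto
    then show "dist (gI M p f h x) (gI M p f h y) \<le> gC M p f h * dist x y"
      using gI_lip[OF f h p, of y x] by (simp add: dist_real_def)
  qed (rule C0)
  then show ?thesis by (rule lipschitz_on_continuous_on)
qed

lemma Lp_norm_powr:
  "0 < p \<Longrightarrow> Lp_norm M p f powr p = (\<integral>z. \<bar>f z\<bar> powr p \<partial>M)"
  unfolding Lp_norm_def by (simp add: powr_powr integral_nonneg_AE)

lemma Lp_norm_less_iff:
  assumes "0 < p" "0 < r"
  shows "Lp_norm M p f < r \<longleftrightarrow> (\<integral>z. \<bar>f z\<bar> powr p \<partial>M) < r powr p"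
proof -
  have I0: "0 \<le> (\<integral>z. \<bar>f z\<bar> powr p \<partial>M)" by (intro integral_nonneg_AE) auto
  have n0: "0 \<le> Lp_norm M p f" by (simp add: Lp_norm_def)
  have "Lp_norm M p f < r \<longleftrightarrow> Lp_norm M p f powr p < r powr p"
  proof
    assume "Lp_norm M p f < r"
    then show "Lp_norm M p f powr p < r powr p" using assms n0 by (intro powr_less_mono2) auto
  next
    assume a: "Lp_norm M p f powr p < r powr p"
    show "Lp_norm M p f < r"
    proof (rule ccontr)
      assume "\<not> Lp_norm M p f < r"
      then have "r powr p \<le> Lp_norm M p f powr p" using assms by (intro powr_mono2) auto
      then show False using a by simp
    qed
  qed
  moreover have "Lp_norm M p f powr p = (\<integral>z. \<bar>f z\<bar> powr p \<partial>M)" by (rule Lp_norm_powr[OF assms(1)])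
  ultimately show ?thesis by simp
qed

lemma Lp_norm_cong:
  assumes "\<And>z. \<bar>f z\<bar> = \<bar>g z\<bar>"
  shows "Lp_norm M p f = Lp_norm M p g"
  unfolding Lp_norm_def using assms by simp

lemma case_ge2:
  fixes M :: "'a measure" and p r :: real and x u v :: "'a \<Rightarrow> real"
  assumes p: "2 \<le> p" and x: "x \<in> Lp_space M p" and u: "u \<in> Lp_space M p" and v: "v \<in> Lp_space M p"
    and r: "0 < r" and Iu: "(\<integral>z. \<bar>u z\<bar> powr p \<partial>M) = r powr p" and Iv: "(\<integral>z. \<bar>v z\<bar> powr p \<partial>M) = r powr p"
    and B1: "r powr p \<le> gI M p (\<lambda>z. (u z + v z)/2) x 1"
    and B2: "r powr p \<le> gI M p (\<lambda>z. (u z + v z)/2) x (-1)"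
  shows "(\<integral>z. \<bar>(u z - v z)/2\<bar> powr p \<partial>M) \<le> p*(p-1)/2 * r powr (p-2) * (\<integral>z. \<bar>x z\<bar> powr p \<partial>M) powr (2/p)"
proof -
  have p1: "1 < p" using p by simp
  define y where "y = (\<lambda>z. (u z + v z)/2)"
  define d where "d = (\<lambda>z. (u z - v z)/2)"
  have yL: "y \<in> Lp_space M p" using Lp_lin[OF u v, of "1/2" "1/2"] p by (simp add: y_def add_divide_distrib)
  have dL: "d \<in> Lp_space M p" using Lp_lin[OF u v, of "1/2" "-1/2"] p by (simp add: d_def diff_divide_distrib)
  define A where "A = r powr p"
  have A0: "0 < A" using r by (simp add: A_def)
  define Iy where "Iy = (\<integral>z. \<bar>y z\<bar> powr p \<partial>M)"
  define Id where "Id = (\<integral>z. \<bar>d z\<bar> powr p \<partial>M)"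
  define Q where "Q = (\<integral>z. \<bar>x z\<bar> powr p \<partial>M) powr (2/p)"
  have Q0: "0 \<le> Q" by (simp add: Q_def)
  have clark: "Iy + Id \<le> A"
  proof -
    have "Iy + Id = (\<integral>z. \<bar>y z\<bar> powr p + \<bar>d z\<bar> powr p \<partial>M)"
      using Lp_spaceD(2)[OF yL] Lp_spaceD(2)[OF dL] by (simp add: Iy_def Id_def)
    also have "\<dots> \<le> (\<integral>z. (\<bar>u z\<bar> powr p + \<bar>v z\<bar> powr p)/2 \<partial>M)"
    proof (rule integral_mono')
      show "integrable M (\<lambda>z. (\<bar>u z\<bar> powr p + \<bar>v z\<bar> powr p)/2)"
        using Lp_spaceD(2)[OF u] Lp_spaceD(2)[OF v] by auto
      fix z
      show "\<bar>y z\<bar> powr p + \<bar>d z\<bar> powr p \<le> (\<bar>u z\<bar> powr p + \<bar>v z\<bar> powr p)/2"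
        using clarkson_ge2[OF p, of "u z" "v z"] by (simp add: y_def d_def)
      show "0 \<le> (\<bar>u z\<bar> powr p + \<bar>v z\<bar> powr p)/2" by simp
    qed
    also have "\<dots> = A"
      using Lp_spaceD(2)[OF u] Lp_spaceD(2)[OF v] Iu Iv by (simp add: A_def)
    finally show ?thesis .
  qed
  have goal_form: "Id \<le> p*(p-1)/2 * r powr (p-2) * Q"
  proof (cases "A \<le> Iy")
    case True
    then have "Id \<le> 0" using clark by simp
    moreover have "0 \<le> p*(p-1)/2 * r powr (p-2) * Q" using p Q0 by simp
    ultimately show ?thesis by linarith
  next
    case False
    then have IyA: "Iy < A" by simp
    define g where "g = gI M p y x"
    define D where "D = gD M p y x"
    define C where "C = gC M p y x"
    have g0: "g 0 = Iy" by (simp add: g_def gI_def Iy_def)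
    have gc: "continuous_on {-1..1} g" unfolding g_def by (rule gI_cont[OF yL x p1])
    have gc1: "continuous_on {0..1} g" using gc by (rule continuous_on_subset) auto
    have gc2: "continuous_on {0..1} (\<lambda>t. g (-t))"
      using gc by (intro continuous_on_compose2[OF gc]) (auto intro!: continuous_intros)
    obtain \<beta> where b: "0 < \<beta>" "\<beta> \<le> 1" "g \<beta> = A" "\<And>t. t \<in> {0..\<beta>} \<Longrightarrow> g t \<le> A"
      using first_hit[OF gc1, of A] IyA g0 B1 by (auto simp: g_def y_def A_def)
    obtain \<beta>' where b': "0 < \<beta>'" "\<beta>' \<le> 1" "g (-\<beta>') = A" "\<And>t. t \<in> {0..\<beta>'} \<Longrightarrow> g (-t) \<le> A"
      using first_hit[OF gc2, of A] IyA g0 B2 by (auto simp: g_def y_def A_def)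
    define \<alpha> where "\<alpha> = -\<beta>'"
    have ab: "\<alpha> < 0" "-1 \<le> \<alpha>" "g \<alpha> = A" using b' by (auto simp: \<alpha>_def)
    have gleA: "g s \<le> A" if "s \<in> {\<alpha>..\<beta>}" for s
    proof (cases "0 \<le> s")
      case True then show ?thesis using b(4)[of s] that by auto
    next
      case False then show ?thesis using b'(4)[of "-s"] that by (auto simp: \<alpha>_def)
    qed
    define \<theta> where "\<theta> = 1 - 2/p"
    have th0: "0 \<le> \<theta>" using p by (simp add: \<theta>_def field_simps)
    define c where "c = p*(p-1)/2 * Q"
    have c0: "0 \<le> c" using p Q0 by (simp add: c_def)
    define K where "K = 2 * c * A powr \<theta>"
    define e where "e = (\<lambda>h. c * h^2 * \<bar>(A + C*h) powr \<theta> - A powr \<theta>\<bar>)"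
    have C0: "0 \<le> C" unfolding C_def gC_def using p by (intro mult_nonneg_nonneg integral_nonneg_AE) auto
    have U: "g t \<le> g s + D s * (t-s) + K/2*(t-s)^2 + e \<bar>t-s\<bar>" if st: "s \<in> {\<alpha>..\<beta>}" "t \<in> {\<alpha>..\<beta>}" for s t
    proof -
      have abs1: "\<bar>s\<bar> \<le> 1" "\<bar>t\<bar> \<le> 1" using st ab b by auto
      have gs0: "0 \<le> g s" by (simp add: g_def gI_def integral_nonneg_AE)
      have "g t \<le> g s + D s * (t - s) + p*(p-1)/2 * ((t-s)^2 * Q * (g s + C * \<bar>t - s\<bar>) powr \<theta>)"
        using seg_upper[OF yL x p abs1] by (simp add: g_def D_def C_def Q_def \<theta>_def)
      also have "(g s + C * \<bar>t - s\<bar>) powr \<theta> \<le> (A + C * \<bar>t - s\<bar>) powr \<theta>"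
        using gleA[OF st(1)] gs0 C0 th0 by (intro powr_mono2) auto
      also have "(A + C * \<bar>t - s\<bar>) powr \<theta> \<le> A powr \<theta> + \<bar>(A + C * \<bar>t - s\<bar>) powr \<theta> - A powr \<theta>\<bar>" by linarith
      finally have "g t \<le> g s + D s * (t - s) + p*(p-1)/2 * ((t-s)^2 * Q * (A powr \<theta> + \<bar>(A + C * \<bar>t - s\<bar>) powr \<theta> - A powr \<theta>\<bar>))"
        using p Q0 by (simp add: mult_left_mono)
      also have "p*(p-1)/2 * ((t-s)^2 * Q * (A powr \<theta> + \<bar>(A + C * \<bar>t - s\<bar>) powr \<theta> - A powr \<theta>\<bar>)) = K/2*(t-s)^2 + e \<bar>t-s\<bar>"
        by (simp add: K_def e_def c_def field_simps power2_abs)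
      finally show ?thesis by simp
    qed
    have E: "\<exists>\<eta>>0. \<forall>h. 0 < h \<and> h < \<eta> \<longrightarrow> e h \<le> \<epsilon> * h^2" if "\<epsilon> > 0" for \<epsilon>
      unfolding e_def using E_small[OF A0 c0 that] .
    have up: "g \<beta> \<le> g 0 + D 0 * (\<beta> - 0) + K/2*(\<beta> - 0)^2"
      by (rule grid_fwd[where e=e and a=\<alpha> and b=\<beta>, OF U E]) (use ab b in auto)
    have dn: "g \<alpha> \<le> g 0 + D 0 * (\<alpha> - 0) + K/2*(\<alpha> - 0)^2"
      by (rule grid_bwd[where e=e and a=\<alpha> and b=\<beta>, OF U E]) (use ab b in auto)
    have K0: "0 \<le> K" using c0 by (simp add: K_def)
    have "(\<beta> - \<alpha>) * A \<le> (\<beta> - \<alpha>) * Iy + K/2 * (-\<alpha>*\<beta>) * (\<beta> - \<alpha>)"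
    proof -
      have "(-\<alpha>) * A \<le> (-\<alpha>) * (Iy + D 0 * \<beta> + K/2*\<beta>^2)"
        using up b ab g0 by (intro mult_left_mono) auto
      moreover have "\<beta> * A \<le> \<beta> * (Iy + D 0 * \<alpha> + K/2*\<alpha>^2)"
        using dn b ab g0 by (intro mult_left_mono) auto
      ultimately have "(-\<alpha>) * A + \<beta> * A \<le> (-\<alpha>) * (Iy + D 0 * \<beta> + K/2*\<beta>^2) + \<beta> * (Iy + D 0 * \<alpha> + K/2*\<alpha>^2)"
        by linarith
      also have "\<dots> = (\<beta> - \<alpha>) * Iy + K/2 * (-\<alpha>*\<beta>) * (\<beta> - \<alpha>)"
        by (simp add: power2_eq_square field_simps)
      also have "(-\<alpha>) * A + \<beta> * A = (\<beta> - \<alpha>) * A" by (simp add: algebra_simps)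
      finally show ?thesis by simp
    qed
    then have "(\<beta> - \<alpha>) * A \<le> (\<beta> - \<alpha>) * (Iy + K/2 * (-\<alpha>*\<beta>))" by (simp add: algebra_simps)
    moreover have "0 < \<beta> - \<alpha>" using ab b by simp
    ultimately have "A \<le> Iy + K/2 * (-\<alpha>*\<beta>)" by (simp add: mult_le_cancel_left_pos)
    moreover have "K/2 * (-\<alpha>*\<beta>) \<le> K/2"
    proof -
      have "-\<alpha>*\<beta> \<le> 1*1" using ab b by (intro mult_mono) auto
      then have "K * (-\<alpha>*\<beta>) \<le> K * 1" using K0 by (intro mult_left_mono) auto
      then show ?thesis by simp
    qed
    ultimately have "Id \<le> K/2" using clark by linarith
    also have "K/2 = p*(p-1)/2 * r powr (p-2) * Q"
    proof -
      have "A powr \<theta> = r powr (p-2)" using p r by (simp add: A_def \<theta>_def powr_powr algebra_simps)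
      then show ?thesis by (simp add: K_def c_def)
    qed
    finally show ?thesis .
  qed
  then show ?thesis by (simp add: Id_def d_def Q_def)
qed

lemma case_lt2:
  fixes M :: "'a measure" and p r :: real and x u v :: "'a \<Rightarrow> real"
  assumes p: "1 < p" "p < 2" and x: "x \<in> Lp_space M p" and u: "u \<in> Lp_space M p" and v: "v \<in> Lp_space M p"
    and r: "0 < r" and Iu: "(\<integral>z. \<bar>u z\<bar> powr p \<partial>M) = r powr p" and Iv: "(\<integral>z. \<bar>v z\<bar> powr p \<partial>M) = r powr p"
    and B1: "r powr p \<le> gI M p (\<lambda>z. (u z + v z)/2) x 1"
    and B2: "r powr p \<le> gI M p (\<lambda>z. (u z + v z)/2) x (-1)"
  shows "p*(p-1)/2 * (\<integral>z. \<bar>(u z - v z)/2\<bar> powr p \<partial>M) powr (2/p) * r powr (p-2) \<le> (\<integral>z. \<bar>x z\<bar> powr p \<partial>M)"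
proof -
  define y where "y = (\<lambda>z. (u z + v z)/2)"
  define d where "d = (\<lambda>z. (u z - v z)/2)"
  have yL: "y \<in> Lp_space M p" using Lp_lin[OF u v, of "1/2" "1/2"] p by (simp add: y_def add_divide_distrib)
  have dL: "d \<in> Lp_space M p" using Lp_lin[OF u v, of "1/2" "-1/2"] p by (simp add: d_def diff_divide_distrib)
  define A where "A = r powr p"
  have A0: "0 < A" using r by (simp add: A_def)
  define Iy where "Iy = (\<integral>z. \<bar>y z\<bar> powr p \<partial>M)"
  define Id where "Id = (\<integral>z. \<bar>d z\<bar> powr p \<partial>M)"
  define Ix where "Ix = (\<integral>z. \<bar>x z\<bar> powr p \<partial>M)"
  have Ix0: "0 \<le> Ix" unfolding Ix_def by (intro integral_nonneg_AE) auto
  have Id0: "0 \<le> Id" unfolding Id_def by (intro integral_nonneg_AE) auto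
  have clark: "A - Iy \<le> Ix"
  proof -
    have "2 * A \<le> gI M p y x 1 + gI M p y x (-1)" using B1 B2 by (simp add: A_def y_def)
    also have "\<dots> = (\<integral>z. \<bar>y z + x z\<bar> powr p + \<bar>y z - x z\<bar> powr p \<partial>M)"
      using Lp_spaceD(2)[OF seg_Lp[OF yL x p(1), of 1]] Lp_spaceD(2)[OF seg_Lp[OF yL x p(1), of "-1"]]
      by (simp add: gI_def)
    also have "\<dots> \<le> (\<integral>z. 2 * \<bar>y z\<bar> powr p + 2 * \<bar>x z\<bar> powr p \<partial>M)"
    proof (rule integral_mono')
      show "integrable M (\<lambda>z. 2 * \<bar>y z\<bar> powr p + 2 * \<bar>x z\<bar> powr p)"
        using Lp_spaceD(2)[OF yL] Lp_spaceD(2)[OF x] by auto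
      fix z
      show "\<bar>y z + x z\<bar> powr p + \<bar>y z - x z\<bar> powr p \<le> 2 * \<bar>y z\<bar> powr p + 2 * \<bar>x z\<bar> powr p"
        using clarkson_le2[OF p(1) less_imp_le[OF p(2)], of "y z" "x z"] .
      show "0 \<le> 2 * \<bar>y z\<bar> powr p + 2 * \<bar>x z\<bar> powr p" by simp
    qed
    also have "\<dots> = 2 * Iy + 2 * Ix"
      using Lp_spaceD(2)[OF yL] Lp_spaceD(2)[OF x] by (simp add: Iy_def Ix_def)
    finally show ?thesis by simp
  qed
  define Q where "Q = Id powr (2/p)"
  have goal_form: "p*(p-1)/2 * Q * r powr (p-2) \<le> Ix"
  proof (cases "Id = 0")
    case True
    then show ?thesis using Ix0 by (simp add: Q_def)
  next
    case False
    then have Idp: "0 < Id" using Id0 by simp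
    define g where "g = gI M p y d"
    define D where "D = gD M p y d"
    define C where "C = gC M p y d"
    have g0: "g 0 = Iy" by (simp add: g_def gI_def Iy_def)
    have g1: "g 1 = A"
    proof -
      have "g 1 = (\<integral>z. \<bar>u z\<bar> powr p \<partial>M)" unfolding g_def gI_def y_def d_def
        by (rule Bochner_Integration.integral_cong) (auto simp: field_simps)
      then show ?thesis using Iu by (simp add: A_def)
    qed
    have gm1: "g (-1) = A"
    proof -
      have "g (-1) = (\<integral>z. \<bar>v z\<bar> powr p \<partial>M)" unfolding g_def gI_def y_def d_def
        by (rule Bochner_Integration.integral_cong) (auto simp: field_simps)
      then show ?thesis using Iv by (simp add: A_def)
    qed
    have gleA: "g t \<le> A" if t: "\<bar>t\<bar> \<le> 1" for t
    proof -
      define l where "l = (1 + t)/2"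
      have l01: "0 \<le> l" "l \<le> 1" using t by (auto simp: l_def)
      have "g t \<le> (\<integral>z. l * \<bar>u z\<bar> powr p + (1-l) * \<bar>v z\<bar> powr p \<partial>M)"
        unfolding g_def gI_def
      proof (rule integral_mono')
        show "integrable M (\<lambda>z. l * \<bar>u z\<bar> powr p + (1-l) * \<bar>v z\<bar> powr p)"
          using Lp_spaceD(2)[OF u] Lp_spaceD(2)[OF v] by auto
        fix z
        have "y z + t * d z = l * u z + (1-l) * v z" by (simp add: y_def d_def l_def field_simps)
        then show "\<bar>y z + t * d z\<bar> powr p \<le> l * \<bar>u z\<bar> powr p + (1-l) * \<bar>v z\<bar> powr p"
          using phi_convex_comb[OF p(1) l01, of "u z" "v z"] by simp
        show "0 \<le> l * \<bar>u z\<bar> powr p + (1-l) * \<bar>v z\<bar> powr p" using l01 by simp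
      qed
      also have "\<dots> = l * A + (1-l) * A"
        using Lp_spaceD(2)[OF u] Lp_spaceD(2)[OF v] Iu Iv by (simp add: A_def)
      also have "\<dots> = A" by (simp add: algebra_simps)
      finally show ?thesis .
    qed
    have Cpos: "0 < C"
    proof -
      have "Id \<le> (\<integral>z. \<bar>d z\<bar> * (\<bar>y z\<bar> + \<bar>d z\<bar>) powr (p-1) \<partial>M)"
        unfolding Id_def
      proof (rule integral_mono)
        show "integrable M (\<lambda>z. \<bar>d z\<bar> powr p)" using Lp_spaceD(2)[OF dL] .
        show "integrable M (\<lambda>z. \<bar>d z\<bar> * (\<bar>y z\<bar> + \<bar>d z\<bar>) powr (p-1))" by (rule integrable_C[OF yL dL p(1)])
        fix z
        have "\<bar>d z\<bar> powr p = \<bar>d z\<bar> * \<bar>d z\<bar> powr (p-1)" using powr_split'[of "\<bar>d z\<bar>" p] by simp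
        also have "\<dots> \<le> \<bar>d z\<bar> * (\<bar>y z\<bar> + \<bar>d z\<bar>) powr (p-1)"
          using p by (intro mult_left_mono powr_mono2) auto
        finally show "\<bar>d z\<bar> powr p \<le> \<bar>d z\<bar> * (\<bar>y z\<bar> + \<bar>d z\<bar>) powr (p-1)" .
      qed
      then show ?thesis using Idp p by (simp add: C_def gC_def)
    qed
    define \<theta> where "\<theta> = (p-2)/p"
    have th0: "\<theta> \<le> 0" using p by (simp add: \<theta>_def divide_nonpos_pos)
    define c where "c = p*(p-1)/2 * Q"
    have c0: "0 \<le> c" using p by (simp add: c_def Q_def)
    define K where "K = 2 * c * A powr \<theta>"
    define e where "e = (\<lambda>h. c * h^2 * \<bar>(A + C*h) powr \<theta> - A powr \<theta>\<bar>)"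
    define G where "G = (\<lambda>t. - g t)"
    define Dn where "Dn = (\<lambda>t. - D t)"
    have U: "G t \<le> G s + Dn s * (t-s) + (-K)/2*(t-s)^2 + e \<bar>t-s\<bar>" if st: "s \<in> {-1..1}" "t \<in> {-1..1}" for s t
    proof (cases "s = t")
      case True then show ?thesis by (simp add: e_def)
    next
      case False
      have abs1: "\<bar>s\<bar> \<le> 1" "\<bar>t\<bar> \<le> 1" using st by auto
      have gs0: "0 \<le> g s" by (simp add: g_def gI_def integral_nonneg_AE)
      have L: "g s + D s * (t - s) + p*(p-1)/2 * ((t-s)^2 * Q * (g s + C * \<bar>t - s\<bar>) powr \<theta>) \<le> g t"
        using seg_lower[OF yL dL p abs1] by (simp add: g_def D_def C_def Q_def Id_def d_def \<theta>_def)
      have pos: "0 < g s + C * \<bar>t - s\<bar>" using gs0 Cpos False by (simp add: add_nonneg_pos)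
      have "(A + C * \<bar>t - s\<bar>) powr \<theta> \<le> (g s + C * \<bar>t - s\<bar>) powr \<theta>"
        using gleA[OF abs1(1)] pos th0 by (intro powr_mono2') auto
      moreover have "A powr \<theta> - \<bar>(A + C * \<bar>t - s\<bar>) powr \<theta> - A powr \<theta>\<bar> \<le> (A + C * \<bar>t - s\<bar>) powr \<theta>" by linarith
      ultimately have "A powr \<theta> - \<bar>(A + C * \<bar>t - s\<bar>) powr \<theta> - A powr \<theta>\<bar> \<le> (g s + C * \<bar>t - s\<bar>) powr \<theta>" by linarith
      then have M1: "p*(p-1)/2 * ((t-s)^2 * Q * (A powr \<theta> - \<bar>(A + C * \<bar>t - s\<bar>) powr \<theta> - A powr \<theta>\<bar>))
          \<le> p*(p-1)/2 * ((t-s)^2 * Q * (g s + C * \<bar>t - s\<bar>) powr \<theta>)"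
        using p by (intro mult_left_mono) (auto simp: Q_def)
      have M2: "p*(p-1)/2 * ((t-s)^2 * Q * (A powr \<theta> - \<bar>(A + C * \<bar>t - s\<bar>) powr \<theta> - A powr \<theta>\<bar>)) = K/2*(t-s)^2 - e \<bar>t-s\<bar>"
        by (simp add: K_def e_def c_def field_simps power2_abs)
      have "g s + D s * (t-s) + (K/2*(t-s)^2 - e \<bar>t-s\<bar>) \<le> g t" using L M1 M2 by linarith
      then show ?thesis unfolding G_def Dn_def by (simp add: algebra_simps)
    qed
    have E: "\<exists>\<eta>>0. \<forall>h. 0 < h \<and> h < \<eta> \<longrightarrow> e h \<le> \<epsilon> * h^2" if "\<epsilon> > 0" for \<epsilon>
      unfolding e_def using E_small[OF A0 c0 that] .
    have up: "G 1 \<le> G 0 + Dn 0 * (1 - 0) + (-K)/2*(1 - 0)^2"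
      by (rule grid_fwd[where e=e and a="-1" and b=1, OF U E]) auto
    have dn: "G (-1) \<le> G 0 + Dn 0 * (-1 - 0) + (-K)/2*(-1 - 0)^2"
      by (rule grid_bwd[where e=e and a="-1" and b=1, OF U E]) auto
    have "K/2 \<le> A - Iy" using up dn g0 g1 gm1 by (simp add: G_def Dn_def)
    also have "K/2 = p*(p-1)/2 * Q * r powr (p-2)"
    proof -
      have e: "p * ((p-2)/p) = p - 2" using p by (simp add: field_simps)
      have "A powr \<theta> = r powr (p-2)" unfolding A_def \<theta>_def powr_powr e ..
      then show ?thesis by (simp add: K_def c_def)
    qed
    finally show ?thesis using clark by linarith
  qed
  then show ?thesis by (simp add: Q_def Id_def d_def Ix_def)
qed

lemma sq_Lp_norm: "0 < p \<Longrightarrow> (Lp_norm M p f)\<^sup>2 = (\<integral>z. \<bar>f z\<bar> powr p \<partial>M) powr (2/p)"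
proof -
  assume p: "0 < p"
  have "(Lp_norm M p f)\<^sup>2 = (Lp_norm M p f) powr 2" by (simp add: Lp_norm_def)
  also have "\<dots> = (\<integral>z. \<bar>f z\<bar> powr p \<partial>M) powr (2/p)" unfolding Lp_norm_def by (simp add: powr_powr)
  finally show ?thesis .
qed

lemma diff_integral:
  fixes u v :: "'a \<Rightarrow> real" and p :: real
  shows "(\<integral>z. \<bar>u z - v z\<bar> powr p \<partial>M) = 2 powr p * (\<integral>z. \<bar>(u z - v z)/2\<bar> powr p \<partial>M)"
proof -
  have "(\<integral>z. \<bar>u z - v z\<bar> powr p \<partial>M) = (\<integral>z. 2 powr p * \<bar>(u z - v z)/2\<bar> powr p \<partial>M)"
  proof (rule Bochner_Integration.integral_cong[OF refl])
    fix z
    show "\<bar>u z - v z\<bar> powr p = 2 powr p * \<bar>(u z - v z)/2\<bar> powr p" by (simp add: powr_divide)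
  qed
  then show ?thesis by simp
qed

theorem lemma5p1:
  fixes M :: "'a measure" and p r :: real and x u v :: "'a \<Rightarrow> real"
  assumes "1 < p"
    and "x \<in> Lp_space M p" and "u \<in> Lp_space M p" and "v \<in> Lp_space M p"
    and "0 < r" and "Lp_norm M p u = r" and "Lp_norm M p v = r"
    and "Lp_ball M p (\<lambda>z. x z + u z) r \<inter> Lp_ball M p (\<lambda>z. - x z - v z) r = {}"
    and "Lp_ball M p (\<lambda>z. x z - u z) r \<inter> Lp_ball M p (\<lambda>z. - x z + v z) r = {}"
  shows "(2 \<le> p \<longrightarrow> Lp_norm M p (\<lambda>z. u z - v z) powr p
            \<le> 2 powr (p - 1) * p * (p - 1) * r powr (p - 2) * (Lp_norm M p x)\<^sup>2)
       \<and> (p \<le> 2 \<longrightarrow> (Lp_norm M p (\<lambda>z. u z - v z))\<^sup>2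
            \<le> 8 / (p * (p - 1)) * r powr (2 - p) * Lp_norm M p x powr p)"
proof -
  note p1 = assms(1) and x = assms(2) and u = assms(3) and v = assms(4) and r = assms(5)
  have p0: "0 < p" using p1 by simp
  have Iu: "(\<integral>z. \<bar>u z\<bar> powr p \<partial>M) = r powr p" using Lp_norm_powr[OF p0, of M u] assms(6) by simp
  have Iv: "(\<integral>z. \<bar>v z\<bar> powr p \<partial>M) = r powr p" using Lp_norm_powr[OF p0, of M v] assms(7) by simp
  have B1: "r powr p \<le> gI M p (\<lambda>z. (u z + v z)/2) x 1"
  proof (rule ccontr)
    assume "\<not> ?thesis"
    then have lt: "(\<integral>z. \<bar>(u z + v z)/2 + 1 * x z\<bar> powr p \<partial>M) < r powr p" by (simp add: gI_def)
    define w where "w = (\<lambda>z. (u z - v z)/2)"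
    have wL: "w \<in> Lp_space M p" using Lp_lin[OF u v, of "1/2" "-1/2"] p0 by (simp add: w_def diff_divide_distrib)
    have n1: "Lp_norm M p (\<lambda>z. w z - (x z + u z)) < r"
    proof -
      have "Lp_norm M p (\<lambda>z. w z - (x z + u z)) = Lp_norm M p (\<lambda>z. (u z + v z)/2 + 1 * x z)"
        by (rule Lp_norm_cong) (simp add: w_def abs_minus_commute field_simps)
      moreover have "Lp_norm M p (\<lambda>z. (u z + v z)/2 + 1 * x z) < r"
        unfolding Lp_norm_less_iff[OF p0 r] by (rule lt)
      ultimately show ?thesis by simp
    qed
    have n2: "Lp_norm M p (\<lambda>z. w z - (- x z - v z)) < r"
    proof -
      have "Lp_norm M p (\<lambda>z. w z - (- x z - v z)) = Lp_norm M p (\<lambda>z. (u z + v z)/2 + 1 * x z)"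
        by (rule Lp_norm_cong) (simp add: w_def field_simps)
      moreover have "Lp_norm M p (\<lambda>z. (u z + v z)/2 + 1 * x z) < r"
        unfolding Lp_norm_less_iff[OF p0 r] by (rule lt)
      ultimately show ?thesis by simp
    qed
    have "w \<in> Lp_ball M p (\<lambda>z. x z + u z) r \<inter> Lp_ball M p (\<lambda>z. - x z - v z) r"
      using wL n1 n2 by (simp add: Lp_ball_def)
    then show False using assms(8) by simp
  qed
  have B2: "r powr p \<le> gI M p (\<lambda>z. (u z + v z)/2) x (-1)"
  proof (rule ccontr)
    assume "\<not> ?thesis"
    then have lt: "(\<integral>z. \<bar>(u z + v z)/2 + (-1) * x z\<bar> powr p \<partial>M) < r powr p" by (simp add: gI_def)
    define w where "w = (\<lambda>z. (v z - u z)/2)"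
    have wL: "w \<in> Lp_space M p" using Lp_lin[OF u v, of "-1/2" "1/2"] p0 by (simp add: w_def diff_divide_distrib)
    have n1: "Lp_norm M p (\<lambda>z. w z - (x z - u z)) < r"
    proof -
      have "Lp_norm M p (\<lambda>z. w z - (x z - u z)) = Lp_norm M p (\<lambda>z. (u z + v z)/2 + (-1) * x z)"
        by (rule Lp_norm_cong) (simp add: w_def field_simps)
      moreover have "Lp_norm M p (\<lambda>z. (u z + v z)/2 + (-1) * x z) < r"
        unfolding Lp_norm_less_iff[OF p0 r] by (rule lt)
      ultimately show ?thesis by simp
    qed
    have n2: "Lp_norm M p (\<lambda>z. w z - (- x z + v z)) < r"
    proof -
      have "Lp_norm M p (\<lambda>z. w z - (- x z + v z)) = Lp_norm M p (\<lambda>z. (u z + v z)/2 + (-1) * x z)"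
        by (rule Lp_norm_cong) (simp add: w_def abs_minus_commute field_simps)
      moreover have "Lp_norm M p (\<lambda>z. (u z + v z)/2 + (-1) * x z) < r"
        unfolding Lp_norm_less_iff[OF p0 r] by (rule lt)
      ultimately show ?thesis by simp
    qed
    have "w \<in> Lp_ball M p (\<lambda>z. x z - u z) r \<inter> Lp_ball M p (\<lambda>z. - x z + v z) r"
      using wL n1 n2 by (simp add: Lp_ball_def)
    then show False using assms(9) by blast
  qed
  define Id where "Id = (\<integral>z. \<bar>(u z - v z)/2\<bar> powr p \<partial>M)"
  define Ix where "Ix = (\<integral>z. \<bar>x z\<bar> powr p \<partial>M)"
  have Id0: "0 \<le> Id" unfolding Id_def by (intro integral_nonneg_AE) auto
  have LHS1: "Lp_norm M p (\<lambda>z. u z - v z) powr p = 2 powr p * Id"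
    using Lp_norm_powr[OF p0, of M "\<lambda>z. u z - v z"] diff_integral[where u=u and v=v and p=p and M=M] by (simp add: Id_def)
  have LHS2: "(Lp_norm M p (\<lambda>z. u z - v z))\<^sup>2 = 4 * Id powr (2/p)"
  proof -
    have "(Lp_norm M p (\<lambda>z. u z - v z))\<^sup>2 = (2 powr p * Id) powr (2/p)"
      using sq_Lp_norm[OF p0, of M "\<lambda>z. u z - v z"] diff_integral[where u=u and v=v and p=p and M=M] by (simp add: Id_def)
    also have "\<dots> = 4 * Id powr (2/p)" using p0 by (simp add: powr_mult powr_powr)
    finally show ?thesis .
  qed
  have part1: "2 \<le> p \<longrightarrow> Lp_norm M p (\<lambda>z. u z - v z) powr p
            \<le> 2 powr (p - 1) * p * (p - 1) * r powr (p - 2) * (Lp_norm M p x)\<^sup>2"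
  proof
    assume p2: "2 \<le> p"
    have c: "Id \<le> p*(p-1)/2 * r powr (p-2) * Ix powr (2/p)"
      using case_ge2[OF p2 x u v r Iu Iv B1 B2] by (simp add: Id_def Ix_def)
    have "Lp_norm M p (\<lambda>z. u z - v z) powr p = 2 powr p * Id" by (rule LHS1)
    also have "\<dots> \<le> 2 powr p * (p*(p-1)/2 * r powr (p-2) * Ix powr (2/p))"
      using c by (intro mult_left_mono) auto
    also have "\<dots> = 2 powr (p - 1) * p * (p - 1) * r powr (p - 2) * (Lp_norm M p x)\<^sup>2"
      using sq_Lp_norm[OF p0, of M x] by (simp add: Ix_def powr_diff)
    finally show "Lp_norm M p (\<lambda>z. u z - v z) powr p \<le> 2 powr (p - 1) * p * (p - 1) * r powr (p - 2) * (Lp_norm M p x)\<^sup>2" .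
  qed
  have part2: "p \<le> 2 \<longrightarrow> (Lp_norm M p (\<lambda>z. u z - v z))\<^sup>2
            \<le> 8 / (p * (p - 1)) * r powr (2 - p) * Lp_norm M p x powr p"
  proof
    assume p2: "p \<le> 2"
    show "(Lp_norm M p (\<lambda>z. u z - v z))\<^sup>2 \<le> 8 / (p * (p - 1)) * r powr (2 - p) * Lp_norm M p x powr p"
    proof (cases "p = 2")
      case True
      have n0: "0 \<le> Lp_norm M p (\<lambda>z. u z - v z)" by (simp add: Lp_norm_def)
      have nx: "0 \<le> Lp_norm M p x" by (simp add: Lp_norm_def)
      show ?thesis using part1 True r n0 nx by simp
    next
      case False
      then have plt: "p < 2" using p2 by simp
      have c: "p*(p-1)/2 * Id powr (2/p) * r powr (p-2) \<le> Ix"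
        using case_lt2[OF p1 plt x u v r Iu Iv B1 B2] by (simp add: Id_def Ix_def)
      have rr: "r powr (p-2) * r powr (2-p) = 1" using r by (simp add: powr_add[symmetric])
      have pp: "0 < p*(p-1)/2" using p1 by simp
      have "(p*(p-1)/2 * Id powr (2/p) * r powr (p-2)) * r powr (2-p) / (p*(p-1)/2)
          = Id powr (2/p) * (r powr (p-2) * r powr (2-p))"
      proof -
        have gen: "\<And>k X a b::real. k \<noteq> 0 \<Longrightarrow> (k * X * a) * b / k = X * (a * b)" by (simp add: field_simps)
        have "p*(p-1)/2 \<noteq> 0" using pp by linarith
        from gen[OF this] show ?thesis .
      qed
      then have "Id powr (2/p) = (p*(p-1)/2 * Id powr (2/p) * r powr (p-2)) * r powr (2-p) / (p*(p-1)/2)"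
        using rr by simp
      also have "\<dots> \<le> Ix * r powr (2-p) / (p*(p-1)/2)"
        using c pp by (intro divide_right_mono mult_right_mono) auto
      finally have "Id powr (2/p) \<le> Ix * r powr (2-p) / (p*(p-1)/2)" .
      then have "4 * Id powr (2/p) \<le> 4 * (Ix * r powr (2-p) / (p*(p-1)/2))" by simp
      also have "\<dots> = 8 / (p * (p - 1)) * r powr (2 - p) * Lp_norm M p x powr p"
        using Lp_norm_powr[OF p0, of M x] by (simp add: Ix_def field_simps)
      finally show ?thesis using LHS2 by simp
    qed
  qed
  show ?thesis using part1 part2 by blast
qed

end
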